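(* Let $N\ge5$, $\mu>0$, $2<p<2+\frac4N$ and $0<c<c_*$. The functional $I$ is bounded from below on $V_r(c)$, and $m_*(c):=\inf_{u\in V_r(c)}I(u)<0$.
   Context: $4^*:=\frac{2N}{N-4}$, $\gamma_p:=\frac N2(\frac12-\frac1p)$. $C_{N,p}$ is the (optimal) Gagliardo–Nirenberg constant with $\|u\|_p\le C_{N,p}\|\Delta u\|_2^{\gamma_p}\|u\|_2^{1-\gamma_p}$ on $H^2(\mathbb R^N)$; $S:=\inf_{u\in H^2\setminus\{0\}}\|\Delta u\|_2^2/\|u\|_{4^*}^2$. $I(u)=\frac12\|\Delta u\|_2^2+\frac12\|\nabla u\|_2^2-\frac{\mu}{p}\|u\|_p^p-\frac1{4^*}\|u\|_{4^*}^{4^*}$ on $H^2(\mathbb R^N)$. $H^2_r(\mathbb R^N):=\{u\in H^2(\mathbb R^N): u\text{ radially decreasing}\}$, $S_r(c):=\{u\in H^2_r:\|u\|_2^2=c\}$. $\mathcal E:=\frac{4^*-p\gamma_p}{2-p\gamma_p}\left(\frac{(2-p\gamma_p)\mu C^p_{N,p}}{(4^*-2)p}\right)^{\frac{4^*-2}{4^*-p\gamma_p}}\left(4^*S^{\frac{4^*}{2}}\right)^{\frac{p\gamma_p-2}{4^*-p\gamma_p}}$, $c_*:=(\frac{1}{2\mathcal E})^{\frac{2(4^*-p\gamma_p)}{p(1-\gamma_p)(4^*-2)}}$; $r_c:=\left(\frac{(2-p\gamma_p)\mu 4^*S^{4^*/2} C^p_{N,p}c^{p(1-\gamma_p)/2}}{(4^*-2)p}\right)^{\frac{1}{4^*-p\gamma_p}}$,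 $r_*:=r_{c_*}$, and $V_r(c):=\{u\in S_r(c):\|\Delta u\|_2^2+\|\nabla u\|_2^2<r_*^2\}$. *)

theory Defs
  imports "HOL-Analysis.Analysis"
begin

text \<open>Functions on R^N are modelled as real-valued functions on real^'n, with N = CARD('n).\<close>

definition dimN :: "('n::finite) itself \<Rightarrow> real" where
  "dimN _ = real CARD('n)"

definition cpartial :: "'n::finite \<Rightarrow> (real^'n \<Rightarrow> real) \<Rightarrow> real^'n \<Rightarrow> real" where
  "cpartial i f x = deriv (\<lambda>t. f (x + t *\<^sub>R axis i 1)) 0"

fun Ck :: "nat \<Rightarrow> (real^'n::finite \<Rightarrow> real) \<Rightarrow> bool" where
  "Ck 0 f = continuous_on UNIV f"
| "Ck (Suc k) f = (continuous_on UNIV f \<and>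
      (\<forall>i x. (\<lambda>t. f (x + t *\<^sub>R axis i 1)) differentiable (at 0)) \<and>
      (\<forall>i. Ck k (cpartial i f)))"

definition test_fun :: "(real^'n::finite \<Rightarrow> real) \<Rightarrow> bool" where
  "test_fun \<phi> \<longleftrightarrow> (\<forall>k. Ck k \<phi>) \<and> bounded {x. \<phi> x \<noteq> 0}"

definition inLp :: "real \<Rightarrow> (real^'n::finite \<Rightarrow> real) \<Rightarrow> bool" where
  "inLp q u \<longleftrightarrow> u \<in> borel_measurable lborel \<and> integrable lborel (\<lambda>x. \<bar>u x\<bar> powr q)"

definition Lnorm :: "real \<Rightarrow> (real^'n::finite \<Rightarrow> real) \<Rightarrow> real" where
  "Lnorm q u = (\<integral>x. \<bar>u x\<bar> powr q \<partial>lborel) powr (1 / q)"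

definition has_weak_partial :: "'n::finite \<Rightarrow> (real^'n \<Rightarrow> real) \<Rightarrow> (real^'n \<Rightarrow> real) \<Rightarrow> bool" where
  "has_weak_partial i u v \<longleftrightarrow>
     (\<forall>\<phi>. test_fun \<phi> \<longrightarrow>
        (\<integral>x. u x * cpartial i \<phi> x \<partial>lborel) = - (\<integral>x. v x * \<phi> x \<partial>lborel))"

definition wpartial :: "'n::finite \<Rightarrow> (real^'n \<Rightarrow> real) \<Rightarrow> real^'n \<Rightarrow> real" where
  "wpartial i u = (SOME v. inLp 2 v \<and> has_weak_partial i u v)"

definition H2 :: "(real^'n::finite \<Rightarrow> real) set" where
  "H2 = {u. inLp 2 u \<and>
           (\<forall>i. \<exists>v. inLp 2 v \<and> has_weak_partial i u v \<and>
              (\<forall>j. \<exists>w. inLp 2 w \<and> has_weak_partial j v w))}"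

definition grad_norm2 :: "(real^'n::finite \<Rightarrow> real) \<Rightarrow> real" where
  "grad_norm2 u = (\<Sum>i\<in>UNIV. (Lnorm 2 (wpartial i u))\<^sup>2)"

definition wlaplace :: "(real^'n::finite \<Rightarrow> real) \<Rightarrow> real^'n \<Rightarrow> real" where
  "wlaplace u = (\<lambda>x. \<Sum>i\<in>UNIV. wpartial i (wpartial i u) x)"

definition crit :: "('n::finite) itself \<Rightarrow> real" where
  "crit n = 2 * dimN n / (dimN n - 4)"

definition gam :: "('n::finite) itself \<Rightarrow> real \<Rightarrow> real" where
  "gam n p = dimN n / 2 * (1/2 - 1/p)"

definition GN_const :: "('n::finite) itself \<Rightarrow> real \<Rightarrow> real" where
  "GN_const n p = Sup {Lnorm p u / (Lnorm 2 (wlaplace u) powr gam n p * Lnorm 2 u powr (1 - gam n p))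
                        | u :: real^'n \<Rightarrow> real. u \<in> H2 \<and> Lnorm 2 u \<noteq> 0}"

definition Sob_const :: "('n::finite) itself \<Rightarrow> real" where
  "Sob_const n = Inf {(Lnorm 2 (wlaplace u))\<^sup>2 / (Lnorm (crit n) u)\<^sup>2
                        | u :: real^'n \<Rightarrow> real. u \<in> H2 \<and> Lnorm 2 u \<noteq> 0}"

definition Ifun :: "real \<Rightarrow> real \<Rightarrow> (real^'n::finite \<Rightarrow> real) \<Rightarrow> real" where
  "Ifun \<mu> p u = 1/2 * (Lnorm 2 (wlaplace u))\<^sup>2 + 1/2 * grad_norm2 u
      - \<mu> / p * Lnorm p u powr p - 1 / crit TYPE('n) * Lnorm (crit TYPE('n)) u powr crit TYPE('n)"

definition radially_decreasing :: "(real^'n::finite \<Rightarrow> real) \<Rightarrow> bool" where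
  "radially_decreasing u \<longleftrightarrow> (\<forall>x y. norm x \<le> norm y \<longrightarrow> u y \<le> u x)"

definition H2r :: "(real^'n::finite \<Rightarrow> real) set" where
  "H2r = {u \<in> H2. radially_decreasing u}"

definition Sr :: "real \<Rightarrow> (real^'n::finite \<Rightarrow> real) set" where
  "Sr c = {u \<in> H2r. (Lnorm 2 u)\<^sup>2 = c}"

definition Ecal :: "('n::finite) itself \<Rightarrow> real \<Rightarrow> real \<Rightarrow> real" where
  "Ecal n \<mu> p = (let s = crit n; g = gam n p; C = GN_const n p; S = Sob_const n in
     (s - p * g) / (2 - p * g)
     * (((2 - p * g) * \<mu> * C powr p) / ((s - 2) * p)) powr ((s - 2) / (s - p * g))
     * (s * S powr (s / 2)) powr ((p * g - 2) / (s - p * g)))"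

definition cstar :: "('n::finite) itself \<Rightarrow> real \<Rightarrow> real \<Rightarrow> real" where
  "cstar n \<mu> p = (let s = crit n; g = gam n p in
     (1 / (2 * Ecal n \<mu> p)) powr (2 * (s - p * g) / (p * (1 - g) * (s - 2))))"

definition rc :: "('n::finite) itself \<Rightarrow> real \<Rightarrow> real \<Rightarrow> real \<Rightarrow> real" where
  "rc n \<mu> p c = (let s = crit n; g = gam n p; C = GN_const n p; S = Sob_const n in
     (((2 - p * g) * \<mu> * s * S powr (s / 2) * C powr p * c powr (p * (1 - g) / 2)) / ((s - 2) * p))
       powr (1 / (s - p * g)))"

definition rstar :: "('n::finite) itself \<Rightarrow> real \<Rightarrow> real \<Rightarrow> real" where
  "rstar n \<mu> p = rc n \<mu> p (cstar n \<mu> p)"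

definition Vr :: "real \<Rightarrow> real \<Rightarrow> real \<Rightarrow> (real^'n::finite \<Rightarrow> real) set" where
  "Vr \<mu> p c = {u \<in> Sr c. (Lnorm 2 (wlaplace u))\<^sup>2 + grad_norm2 u < (rstar TYPE('n) \<mu> p)\<^sup>2}"

end

theory Submission
  imports Defs "HOL-Computational_Algebra.Polynomial"
begin

definition smooth1 :: "(real \<Rightarrow> real) \<Rightarrow> bool" where
  "smooth1 f \<longleftrightarrow> (\<forall>n x. ((deriv ^^ n) f) field_differentiable at x)"

lemma smooth1_deriv: "smooth1 f \<Longrightarrow> smooth1 (deriv f)"
  unfolding smooth1_def by (metis funpow_Suc_right o_apply)

lemma smooth1_DERIV: "smooth1 f \<Longrightarrow> (f has_field_derivative deriv f x) (at x)"
  unfolding smooth1_def by (metis DERIV_deriv_iff_field_differentiable funpow_0)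

lemma smooth1_cont: "smooth1 f \<Longrightarrow> continuous_on UNIV f"
  by (meson DERIV_isCont continuous_at_imp_continuous_on smooth1_DERIV)

lemma higher_deriv_add_gen:
  assumes "\<forall>j<n. \<forall>x. ((deriv ^^ j) f) field_differentiable at x"
    and "\<forall>j<n. \<forall>x. ((deriv ^^ j) g) field_differentiable at x"
  shows "(deriv ^^ n) (\<lambda>y. f y + g y) = (\<lambda>y. (deriv ^^ n) f y + (deriv ^^ n) g y)"
  using assms
proof (induction n arbitrary: f g)
  case 0
  then show ?case by simp
next
  case (Suc n)
  have d: "deriv (\<lambda>y. f y + g y) = (\<lambda>y. deriv f y + deriv g y)"
    using Suc.prems by (intro ext deriv_add) (metis funpow_0 zero_less_Suc)+
  have "(deriv ^^ Suc n) (\<lambda>y. f y + g y) = (deriv ^^ n) (deriv (\<lambda>y. f y + g y))"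
    by (simp add: funpow_Suc_right del: funpow.simps)
  also have "\<dots> = (\<lambda>y. (deriv ^^ n) (deriv f) y + (deriv ^^ n) (deriv g) y)"
    unfolding d
    apply (rule Suc.IH)
    using Suc.prems by (metis Suc_mono comp_apply funpow_Suc_right)+
  finally show ?case by (simp add: funpow_Suc_right del: funpow.simps)
qed

lemma smooth1_mult_aux:
  "\<forall>f g. smooth1 f \<longrightarrow> smooth1 g \<longrightarrow> (\<forall>m\<le>n. \<forall>x. ((deriv ^^ m) (\<lambda>y. f y * g y)) field_differentiable at x)"
proof (induction n)
  case 0
  then show ?case
    by (auto simp: smooth1_def intro!: field_differentiable_mult) (metis funpow_0)+
next
  case (Suc n)
  show ?case
  proof (intro allI impI)
    fix f g m x
    assume f: "smooth1 f" and g: "smooth1 g" and m: "m \<le> Suc n"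
    show "((deriv ^^ m) (\<lambda>y. f y * g y)) field_differentiable at x"
    proof (cases "m \<le> n")
      case True
      then show ?thesis using Suc.IH f g by blast
    next
      case False
      then have m: "m = Suc n" using m by simp
      have fd: "f field_differentiable at y" "g field_differentiable at y" for y
        using f g unfolding smooth1_def by (metis funpow_0)+
      have d: "deriv (\<lambda>y. f y * g y) = (\<lambda>y. f y * deriv g y + deriv f y * g y)"
        using fd by (intro ext deriv_mult) auto
      have f': "smooth1 (deriv f)" and g': "smooth1 (deriv g)"
        using f g smooth1_deriv by auto
      have "(deriv ^^ m) (\<lambda>y. f y * g y) = (deriv ^^ n) (deriv (\<lambda>y. f y * g y))"
        unfolding m by (simp add: funpow_Suc_right del: funpow.simps)
      also have "\<dots> = (\<lambda>y. (deriv ^^ n) (\<lambda>y. f y * deriv g y) y + (deriv ^^ n) (\<lambda>y. deriv f y * g y) y)"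
        unfolding d
        apply (rule higher_deriv_add_gen)
        using Suc.IH f g f' g' by auto
      finally show ?thesis
        using Suc.IH f g f' g' by (auto intro!: field_differentiable_add)
    qed
  qed
qed

lemma smooth1_mult: "smooth1 f \<Longrightarrow> smooth1 g \<Longrightarrow> smooth1 (\<lambda>y. f y * g y)"
  using smooth1_mult_aux unfolding smooth1_def by blast

lemma higher_deriv_affine:
  assumes "smooth1 f"
  shows "(deriv ^^ n) (\<lambda>y. f (c * y + d)) = (\<lambda>y. c ^ n * (deriv ^^ n) f (c * y + d))"
proof (induction n)
  case 0
  then show ?case by simp
next
  case (Suc n)
  have sm: "smooth1 ((deriv ^^ n) f)"
    using assms by (induction n) (auto simp: smooth1_deriv)
  have D: "((\<lambda>y. c ^ n * (deriv ^^ n) f (c * y + d)) has_field_derivative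
            c ^ Suc n * deriv ((deriv ^^ n) f) (c * y + d)) (at y)" for y
  proof -
    have "(((deriv ^^ n) f) has_field_derivative deriv ((deriv ^^ n) f) (c * y + d)) (at (c * y + d))"
      using sm smooth1_DERIV by blast
    then have "((\<lambda>y. (deriv ^^ n) f (c * y + d)) has_field_derivative
          deriv ((deriv ^^ n) f) (c * y + d) * c) (at y)"
      by (rule DERIV_chain2) (auto intro!: derivative_eq_intros)
    from DERIV_cmult[OF this, of "c ^ n"] show ?thesis
      by (simp add: algebra_simps)
  qed
  show ?case
    by (simp only: funpow.simps o_apply Suc) (intro ext DERIV_imp_deriv D)
qed

lemma smooth1_affine: "smooth1 f \<Longrightarrow> smooth1 (\<lambda>y. f (c * y + d))"
proof -
  assume f: "smooth1 f"
  have sm: "smooth1 ((deriv ^^ n) f)" for n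
    using f by (induction n) (auto simp: smooth1_deriv)
  show ?thesis
    unfolding smooth1_def higher_deriv_affine[OF f]
  proof (intro allI)
    fix n x
    have "(((deriv ^^ n) f) has_field_derivative deriv ((deriv ^^ n) f) (c * x + d)) (at (c * x + d))"
      using sm smooth1_DERIV by blast
    then have "((\<lambda>y. (deriv ^^ n) f (c * y + d)) has_field_derivative
          deriv ((deriv ^^ n) f) (c * x + d) * c) (at x)"
      by (rule DERIV_chain2) (auto intro!: derivative_eq_intros)
    then show "(\<lambda>y. c ^ n * (deriv ^^ n) f (c * y + d)) field_differentiable at x"
      unfolding field_differentiable_def by (auto intro!: derivative_eq_intros)
  qed
qed

definition Gp :: "real poly \<Rightarrow> real \<Rightarrow> real" where
  "Gp P y = (if y > 0 then poly P (1 / y) * exp (- (1 / y)) else 0)"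

definition Qp :: "real poly \<Rightarrow> real poly" where
  "Qp P = [:0, 0, 1:] * (P - pderiv P)"

lemma poly_exp_lim: fixes P :: "real poly" shows "((\<lambda>z. poly P z * exp (- z)) \<longlongrightarrow> 0) at_top"
proof -
  have "((\<lambda>z. \<Sum>i\<le>degree P. coeff P i * (z ^ i / exp z)) \<longlongrightarrow> (\<Sum>i\<le>degree P. coeff P i * 0)) at_top"
    by (intro tendsto_sum tendsto_mult tendsto_const tendsto_power_div_exp_0)
  moreover have "poly P z * exp (- z) = (\<Sum>i\<le>degree P. coeff P i * (z ^ i / exp z))" for z
    by (simp add: poly_altdef exp_minus sum_distrib_right divide_inverse mult.assoc)
  ultimately show ?thesis by simp
qed

lemma poly_exp_lim0: fixes P :: "real poly" shows "((\<lambda>y. poly P (1 / y) * exp (- (1 / y))) \<longlongrightarrow> 0) (at_right 0)"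
proof -
  have "filterlim (\<lambda>y::real. 1 / y) at_top (at_right 0)"
    using filterlim_inverse_at_top_right by (simp add: inverse_eq_divide)
  from filterlim_compose[OF poly_exp_lim this] show ?thesis by (simp add: o_def)
qed

lemma Gp_DERIV: "(Gp P has_field_derivative Gp (Qp P) y) (at y)"
proof (cases "y > 0")
  case True
  have "((\<lambda>y. poly P (1 / y) * exp (- (1 / y))) has_field_derivative
          poly (pderiv P) (1 / y) * (- 1 / y^2) * exp (- (1 / y)) + poly P (1 / y) * (exp (- (1 / y)) * (1 / y^2))) (at y)"
    using True
    by (auto intro!: derivative_eq_intros DERIV_chain2[OF poly_DERIV] simp: power2_eq_square field_simps)
  moreover have "poly (pderiv P) (1 / y) * (- 1 / y^2) * exp (- (1 / y)) + poly P (1 / y) * (exp (- (1 / y)) * (1 / y^2))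
      = Gp (Qp P) y"
    using True by (simp add: Gp_def Qp_def algebra_simps power2_eq_square divide_simps)
  ultimately have "((\<lambda>y. poly P (1 / y) * exp (- (1 / y))) has_field_derivative Gp (Qp P) y) (at y)"
    by simp
  then show ?thesis
    by (rule has_field_derivative_transform_within_open[where S="{0<..}"]) (use True in \<open>auto simp: Gp_def\<close>)
next
  case False
  show ?thesis
  proof (cases "y < 0")
    case True
    have "((\<lambda>y. 0) has_field_derivative 0) (at y)" by simp
    then have "(Gp P has_field_derivative 0) (at y)"
      by (rule has_field_derivative_transform_within_open[where S="{..<0}"]) (use True in \<open>auto simp: Gp_def\<close>)
    then show ?thesis using True by (simp add: Gp_def)
  next
    case False
    with \<open>\<not> y > 0\<close> have y: "y = 0" by simp
    have "((\<lambda>h. (Gp P h - Gp P 0) / (h - 0)) \<longlongrightarrow> 0) (at 0)"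
      unfolding filterlim_at_split
    proof
      show "((\<lambda>h. (Gp P h - Gp P 0) / (h - 0)) \<longlongrightarrow> 0) (at_left 0)"
        by (rule tendsto_eventually) (unfold eventually_at_left_field, intro exI[of _ "-1"], auto simp: Gp_def)
      have "((\<lambda>y. poly ([:0,1:] * P) (1 / y) * exp (- (1 / y))) \<longlongrightarrow> 0) (at_right 0)"
        by (rule poly_exp_lim0)
      moreover have "\<forall>\<^sub>F h in at_right 0. poly ([:0,1:] * P) (1 / h) * exp (- (1 / h)) = (Gp P h - Gp P 0) / (h - 0)"
        unfolding eventually_at_right_field by (intro exI[of _ 1]) (auto simp: Gp_def)
      ultimately show "((\<lambda>h. (Gp P h - Gp P 0) / (h - 0)) \<longlongrightarrow> 0) (at_right 0)"
        by (rule Lim_transform_eventually)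
    qed
    then have "(Gp P has_field_derivative 0) (at 0)"
      using has_field_derivative_iff by blast
    then show ?thesis using y by (simp add: Gp_def)
  qed
qed

lemma deriv_Gp: "deriv (Gp P) = Gp (Qp P)"
  by (intro ext DERIV_imp_deriv Gp_DERIV)

lemma smooth1_Gp: "smooth1 (Gp P)"
proof -
  have "(deriv ^^ n) (Gp P) = Gp ((Qp ^^ n) P)" for n
    by (induction n) (auto simp: deriv_Gp)
  then show ?thesis
    unfolding smooth1_def field_differentiable_def using Gp_DERIV by metis
qed

definition Ebump :: "real \<Rightarrow> real" where "Ebump = Gp 1"

lemma Ebump_eq: "Ebump y = (if y > 0 then exp (- (1 / y)) else 0)"
  by (simp add: Ebump_def Gp_def)

lemma smooth1_Ebump: "smooth1 Ebump"
  by (simp add: Ebump_def smooth1_Gp)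

lemma Ebump_bounds: "0 \<le> Ebump y" "Ebump y \<le> 1"
  by (auto simp: Ebump_eq)

definition psi :: "real \<Rightarrow> real \<Rightarrow> real \<Rightarrow> real \<Rightarrow> real" where
  "psi a b k y = Ebump (k * y + (- k * a)) * Ebump ((- k) * y + k * b)"

lemma smooth1_psi: "smooth1 (psi a b k)"
  unfolding psi_def by (intro smooth1_mult smooth1_affine smooth1_Ebump)

lemma psi_bounds: "0 \<le> psi a b k y" "psi a b k y \<le> 1"
  unfolding psi_def using Ebump_bounds by (auto intro: mult_le_one)

lemma psi_zero: "k > 0 \<Longrightarrow> \<not> (a < y \<and> y < b) \<Longrightarrow> psi a b k y = 0"
  unfolding psi_def Ebump_eq by (auto simp: algebra_simps mult_le_cancel_left_pos not_less)

lemma psi_lim: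
  assumes "a < y" "y < b"
  shows "(\<lambda>k. psi a b (real (Suc k)) y) \<longlonglongrightarrow> 1"
proof -
  have L: "(\<lambda>k. 1 / real (Suc k)) \<longlonglongrightarrow> 0"
    using LIMSEQ_inverse_real_of_nat by (simp add: inverse_eq_divide)
  have "(\<lambda>k. exp (- ((1 / (y - a)) * (1 / real (Suc k)))) * exp (- ((1 / (b - y)) * (1 / real (Suc k))))) \<longlonglongrightarrow>
      exp (- ((1 / (y - a)) * 0)) * exp (- ((1 / (b - y)) * 0))"
    by (intro tendsto_intros L)
  then have "(\<lambda>k. exp (- (1 / ((y - a) * real (Suc k)))) * exp (- (1 / ((b - y) * real (Suc k))))) \<longlonglongrightarrow> 1"
    by simp
  moreover have "psi a b (real (Suc k)) y = exp (- (1 / ((y - a) * real (Suc k)))) * exp (- (1 / ((b - y) * real (Suc k))))" for k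
  proof -
    have e1: "real (Suc k) * y + - real (Suc k) * a = (y - a) * real (Suc k)"
      and e2: "- real (Suc k) * y + real (Suc k) * b = (b - y) * real (Suc k)" by (simp_all add: algebra_simps)
    have p: "(y - a) * real (Suc k) > 0" "(b - y) * real (Suc k) > 0" using assms by auto
    show ?thesis unfolding psi_def Ebump_eq e1 e2 using p by simp
  qed
  ultimately show ?thesis by simp
qed

definition pfun :: "('n::finite \<Rightarrow> real \<Rightarrow> real) \<Rightarrow> real^'n \<Rightarrow> real" where
  "pfun f x = (\<Prod>j\<in>UNIV. f j (x $ j))"

lemma axis_line_nth: "(x + t *\<^sub>R axis i 1) $ j = x $ j + (if j = i then t else 0)"
  by (simp add: axis_def)

lemma pfun_line:
  "pfun f (x + t *\<^sub>R axis i 1) = f i (x $ i + t) * (\<Prod>j\<in>UNIV - {i}. f j (x $ j))"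
proof -
  have "pfun f (x + t *\<^sub>R axis i 1) = f i ((x + t *\<^sub>R axis i 1) $ i) * (\<Prod>j\<in>UNIV - {i}. f j ((x + t *\<^sub>R axis i 1) $ j))"
    unfolding pfun_def by (rule prod.remove) auto
  also have "(\<Prod>j\<in>UNIV - {i}. f j ((x + t *\<^sub>R axis i 1) $ j)) = (\<Prod>j\<in>UNIV - {i}. f j (x $ j))"
    by (intro prod.cong) (auto simp: axis_def)
  finally show ?thesis by (simp add: axis_line_nth)
qed

lemma pfun_upd: "pfun (f(i := g)) x = g (x $ i) * (\<Prod>j\<in>UNIV - {i}. f j (x $ j))"
proof -
  have "pfun (f(i := g)) x = g (x $ i) * (\<Prod>j\<in>UNIV - {i}. (f(i := g)) j (x $ j))"
    unfolding pfun_def by (subst prod.remove[of UNIV i]) auto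
  also have "(\<Prod>j\<in>UNIV - {i}. (f(i := g)) j (x $ j)) = (\<Prod>j\<in>UNIV - {i}. f j (x $ j))"
    by (intro prod.cong) auto
  finally show ?thesis .
qed

lemma pfun_line_DERIV:
  assumes "smooth1 (f i)"
  shows "((\<lambda>t. pfun f (x + t *\<^sub>R axis i 1)) has_field_derivative
           deriv (f i) (x $ i + t0) * (\<Prod>j\<in>UNIV - {i}. f j (x $ j))) (at t0)"
proof -
  have "((\<lambda>t. f i (x $ i + t)) has_field_derivative deriv (f i) (x $ i + t0) * 1) (at t0)"
    by (rule DERIV_chain2[OF smooth1_DERIV[OF assms]]) (auto intro!: derivative_eq_intros)
  then show ?thesis
    unfolding pfun_line by (auto intro!: derivative_eq_intros)
qed

lemma cpartial_pfun:
  assumes "smooth1 (f i)"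
  shows "cpartial i (pfun f) = pfun (f(i := deriv (f i)))"
proof
  fix x
  show "cpartial i (pfun f) x = pfun (f(i := deriv (f i))) x"
    unfolding cpartial_def pfun_upd
    using DERIV_imp_deriv[OF pfun_line_DERIV[of f i x 0, OF assms]] by simp
qed

lemma continuous_pfun:
  assumes "\<And>j. smooth1 (f j)"
  shows "continuous_on UNIV (pfun f)"
proof -
  have "continuous_on UNIV (\<lambda>x::real^'a. f j (x $ j))" for j
    by (rule continuous_on_compose2[OF smooth1_cont[OF assms[of j]] linear_continuous_on[OF bounded_linear_vec_nth]]) auto
  then show ?thesis
    unfolding pfun_def by (intro continuous_on_prod) auto
qed

lemma Ck_pfun:
  assumes "\<And>j. smooth1 (f j)"
  shows "Ck m (pfun f)"
  using assms
proof (induction m arbitrary: f)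
  case 0
  then show ?case by (simp add: continuous_pfun)
next
  case (Suc m)
  have diff: "(\<lambda>t. pfun f (x + t *\<^sub>R axis i 1)) differentiable (at 0)" for x i
    using pfun_line_DERIV[of f i x 0, OF Suc.prems] real_differentiable_def by blast
  have "Ck m (cpartial i (pfun f))" for i
    unfolding cpartial_pfun[OF Suc.prems]
    by (rule Suc.IH) (auto simp: Suc.prems smooth1_deriv)
  then show ?case
    using diff continuous_pfun[OF Suc.prems] by simp
qed

definition bumpfun :: "real^'n \<Rightarrow> real^'n \<Rightarrow> real \<Rightarrow> real^'n::finite \<Rightarrow> real" where
  "bumpfun a b k = pfun (\<lambda>j. psi (a $ j) (b $ j) k)"

lemma bumpfun_bounds: "0 \<le> bumpfun a b k x" "bumpfun a b k x \<le> 1"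
  unfolding bumpfun_def pfun_def
  by (auto intro!: prod_nonneg prod_le_1 psi_bounds)

lemma bumpfun_zero: "k > 0 \<Longrightarrow> x \<notin> box a b \<Longrightarrow> bumpfun a b k x = 0"
proof -
  assume k: "k > 0" and x: "x \<notin> box a b"
  then obtain j where j: "\<not> (a $ j < x $ j \<and> x $ j < b $ j)"
    unfolding mem_box_cart by blast
  show ?thesis unfolding bumpfun_def pfun_def
    by (rule prod_zero) (use psi_zero[OF k j] in auto)
qed

lemma bumpfun_test: "k > 0 \<Longrightarrow> test_fun (bumpfun a b k)"
proof -
  assume k: "k > 0"
  have "{x. bumpfun a b k x \<noteq> 0} \<subseteq> box a b"
    using bumpfun_zero[OF k] by blast
  then have "bounded {x. bumpfun a b k x \<noteq> 0}"
    using bounded_box bounded_subset by blast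
  moreover have "Ck m (bumpfun a b k)" for m
    unfolding bumpfun_def by (rule Ck_pfun) (rule smooth1_psi)
  ultimately show ?thesis unfolding test_fun_def by blast
qed

lemma bumpfun_lim:
  "(\<lambda>k. bumpfun a b (real (Suc k)) x) \<longlonglongrightarrow> indicator (box a b) x"
proof (cases "x \<in> box a b")
  case True
  then have "(\<lambda>k. \<Prod>j\<in>UNIV. psi (a $ j) (b $ j) (real (Suc k)) (x $ j)) \<longlonglongrightarrow> (\<Prod>j\<in>(UNIV::'a set). 1)"
    by (intro tendsto_prod psi_lim) (auto simp: mem_box_cart)
  then show ?thesis using True by (simp add: bumpfun_def pfun_def)
next
  case False
  then show ?thesis by (simp add: bumpfun_zero)
qed

lemma FL_box:
  fixes h :: "real^'n::finite \<Rightarrow> real"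
  assumes hm: "h \<in> borel_measurable lborel"
    and hint: "integrable lborel (\<lambda>x. h x * indicator (box a b) x)"
    and orth: "\<And>\<phi>. test_fun \<phi> \<Longrightarrow> (\<integral>x. h x * \<phi> x \<partial>lborel) = 0"
  shows "(\<integral>x. h x * indicator (box a b) x \<partial>lborel) = 0"
proof -
  let ?s = "\<lambda>k x. h x * bumpfun a b (real (Suc k)) x"
  have cont: "continuous_on UNIV (bumpfun a b k)" for k
    unfolding bumpfun_def by (intro continuous_pfun smooth1_psi)
  have sm: "?s k \<in> borel_measurable lborel" for k
  proof -
    have "bumpfun a b (real (Suc k)) \<in> borel_measurable borel"
      by (rule borel_measurable_continuous_onI[OF cont])
    then have "bumpfun a b (real (Suc k)) \<in> borel_measurable lborel"
      by simp
    with hm show ?thesis by (rule borel_measurable_times)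
  qed
  have "(\<lambda>k. \<integral>x. ?s k x \<partial>lborel) \<longlonglongrightarrow> (\<integral>x. h x * indicator (box a b) x \<partial>lborel)"
  proof (rule integral_dominated_convergence[where w="\<lambda>x. norm (h x * indicator (box a b) x)"])
    show "(\<lambda>x. h x * indicator (box a b) x) \<in> borel_measurable lborel"
      using hint by auto
    show "?s k \<in> borel_measurable lborel" for k by (rule sm)
    show "integrable lborel (\<lambda>x. norm (h x * indicator (box a b) x))"
      using hint by auto
    show "AE x in lborel. (\<lambda>k. ?s k x) \<longlonglongrightarrow> h x * indicator (box a b) x"
      by (intro AE_I2 tendsto_mult tendsto_const bumpfun_lim)
    show "AE x in lborel. norm (?s k x) \<le> norm (h x * indicator (box a b) x)" for k
    proof (intro AE_I2)
      fix x
      show "norm (?s k x) \<le> norm (h x * indicator (box a b) x)"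
      proof (cases "x \<in> box a b")
        case True
        then show ?thesis using bumpfun_bounds[of a b "real (Suc k)" x]
          by (auto simp: abs_mult intro: mult_left_le)
      next
        case False
        then show ?thesis by (simp add: bumpfun_zero)
      qed
    qed
  qed
  moreover have "(\<integral>x. ?s k x \<partial>lborel) = 0" for k
    by (rule orth) (rule bumpfun_test, simp)
  ultimately show ?thesis
  proof -
    assume a1: "(\<lambda>k. \<integral>x. ?s k x \<partial>lborel) \<longlonglongrightarrow> (\<integral>x. h x * indicator (box a b) x \<partial>lborel)"
      and a2: "\<And>k. (\<integral>x. ?s k x \<partial>lborel) = 0"
    from a1 have "(\<lambda>k. 0::real) \<longlonglongrightarrow> (\<integral>x. h x * indicator (box a b) x \<partial>lborel)"
      unfolding a2 .
    from LIMSEQ_unique[OF this tendsto_const] show ?thesis by simp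
  qed
qed

lemma FL:
  fixes h :: "real^'n::finite \<Rightarrow> real"
  assumes hm: "h \<in> borel_measurable lborel"
    and hint: "\<And>a b. integrable lborel (\<lambda>x. h x * indicator (box a b) x)"
    and orth: "\<And>\<phi>. test_fun \<phi> \<Longrightarrow> (\<integral>x. h x * \<phi> x \<partial>lborel) = 0"
  shows "AE x in lborel. h x = 0"
proof -
  define F where "F = (\<lambda>x. ennreal (max 0 (h x)))"
  define G where "G = (\<lambda>x. ennreal (max 0 (- h x)))"
  have Fm: "F \<in> borel_measurable lborel" and Gm: "G \<in> borel_measurable lborel"
    unfolding F_def G_def using hm by measurable
  have key: "(\<integral>\<^sup>+x. F x * indicator (box a b) x \<partial>lborel) = ennreal (\<integral>x. max 0 (h x * indicator (box a b) x) \<partial>lborel)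
        \<and> (\<integral>\<^sup>+x. G x * indicator (box a b) x \<partial>lborel) = ennreal (\<integral>x. max 0 (- (h x * indicator (box a b) x)) \<partial>lborel)
        \<and> (\<integral>x. max 0 (h x * indicator (box a b) x) \<partial>lborel) = (\<integral>x. max 0 (- (h x * indicator (box a b) x)) \<partial>lborel)" for a b
  proof -
    let ?g = "\<lambda>x. h x * indicator (box a b) x"
    have i1: "integrable lborel (\<lambda>x. max 0 (?g x))"
      using hint[of a b] by (intro integrable_max) auto
    have i2: "integrable lborel (\<lambda>x. max 0 (- ?g x))"
      using hint[of a b] by (intro integrable_max) auto
    have e1: "(\<integral>\<^sup>+x. F x * indicator (box a b) x \<partial>lborel) = (\<integral>\<^sup>+x. ennreal (max 0 (?g x)) \<partial>lborel)"
      by (intro nn_integral_cong) (auto simp: F_def indicator_def)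
    have e2: "(\<integral>\<^sup>+x. G x * indicator (box a b) x \<partial>lborel) = (\<integral>\<^sup>+x. ennreal (max 0 (- ?g x)) \<partial>lborel)"
      by (intro nn_integral_cong) (auto simp: G_def indicator_def)
    have "(\<integral>x. max 0 (?g x) \<partial>lborel) - (\<integral>x. max 0 (- ?g x) \<partial>lborel) = (\<integral>x. max 0 (?g x) - max 0 (- ?g x) \<partial>lborel)"
      using i1 i2 by simp
    also have "\<dots> = (\<integral>x. ?g x \<partial>lborel)"
      by (intro Bochner_Integration.integral_cong) auto
    also have "\<dots> = 0"
      by (rule FL_box[OF hm hint orth])
    finally have "(\<integral>x. max 0 (?g x) \<partial>lborel) = (\<integral>x. max 0 (- ?g x) \<partial>lborel)" by simp
    moreover have "(\<integral>\<^sup>+x. ennreal (max 0 (?g x)) \<partial>lborel) = ennreal (\<integral>x. max 0 (?g x) \<partial>lborel)"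
      using i1 by (intro nn_integral_eq_integral) auto
    moreover have "(\<integral>\<^sup>+x. ennreal (max 0 (- ?g x)) \<partial>lborel) = ennreal (\<integral>x. max 0 (- ?g x) \<partial>lborel)"
      using i2 by (intro nn_integral_eq_integral) auto
    ultimately show ?thesis using e1 e2 by simp
  qed
  have "density lborel F = density lborel G"
  proof (rule measure_eqI_generator_eq[where E="range (\<lambda>(a, b). box a b)" and \<Omega>=UNIV
        and A="\<lambda>n::nat. box (- (real n *\<^sub>R One)) (real n *\<^sub>R One)"])
    show "Int_stable (range (\<lambda>(a, b). box a b :: (real^'n) set))"
      by (auto simp: Int_stable_def box_Int_box)
    show "range (\<lambda>(a, b). box a b :: (real^'n) set) \<subseteq> Pow UNIV" by auto
    show "sets (density lborel F) = sigma_sets UNIV (range (\<lambda>(a, b). box a b))"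
      by (simp add: borel_eq_box)
    show "sets (density lborel G) = sigma_sets UNIV (range (\<lambda>(a, b). box a b))"
      by (simp add: borel_eq_box)
    show "range (\<lambda>n::nat. box (- (real n *\<^sub>R One)) (real n *\<^sub>R One :: real^'n)) \<subseteq> range (\<lambda>(a, b). box a b)"
      by auto
    show "(\<Union>n. box (- (real n *\<^sub>R One)) (real n *\<^sub>R One :: real^'n)) = UNIV"
      by (rule UN_box_eq_UNIV)
    show "emeasure (density lborel F) (box (- (real n *\<^sub>R One)) (real n *\<^sub>R One)) \<noteq> \<infinity>" for n
      using key Fm by (simp add: emeasure_density)
    show "emeasure (density lborel F) X = emeasure (density lborel G) X" if "X \<in> range (\<lambda>(a, b). box a b)" for X
      using that key Fm Gm by (auto simp: emeasure_density)
  qed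
  then have "AE x in lborel. F x = G x"
    using sigma_finite_measure.density_unique[OF sigma_finite_lborel Fm Gm] by blast
  then show ?thesis
  proof eventually_elim
    fix x assume "F x = G x"
    then have "max 0 (h x) = max 0 (- h x)"
      unfolding F_def G_def by (subst (asm) ennreal_inj) auto
    then show "h x = 0" by linarith
  qed
qed

lemma nn_integral_affine_e:
  fixes f :: "'a::euclidean_space \<Rightarrow> ennreal" and c :: real
  assumes c: "c \<noteq> 0" and f[measurable]: "f \<in> borel_measurable borel"
  shows "(\<integral>\<^sup>+x. f x \<partial>lborel) = \<bar>c\<bar>^DIM('a) * (\<integral>\<^sup>+x. f (t + c *\<^sub>R x) \<partial>lborel)"
  by (subst lborel_affine[OF c, of t]) (simp add: nn_integral_density nn_integral_distr nn_integral_cmult)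

lemma integrable_affine_e:
  fixes f :: "'a::euclidean_space \<Rightarrow> real" and c :: real
  assumes f: "integrable lborel f" and c: "c \<noteq> 0"
  shows "integrable lborel (\<lambda>x. f (t + c *\<^sub>R x))"
proof -
  have fm[measurable]: "f \<in> borel_measurable borel" using f by auto
  have "(\<integral>\<^sup>+x. ennreal (norm (f x)) \<partial>lborel) < \<infinity>"
    using f unfolding integrable_iff_bounded by auto
  then have "\<bar>c\<bar>^DIM('a) * (\<integral>\<^sup>+x. ennreal (norm (f (t + c *\<^sub>R x))) \<partial>lborel) < \<infinity>"
    by (subst (asm) nn_integral_affine_e[OF c, of _ t]) auto
  then have "(\<integral>\<^sup>+x. ennreal (norm (f (t + c *\<^sub>R x))) \<partial>lborel) < \<infinity>"
    using c by (auto simp: ennreal_mult_less_top power_abs)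
  then show ?thesis unfolding integrable_iff_bounded by auto
qed

lemma integrable_affine_e_iff:
  fixes f :: "'a::euclidean_space \<Rightarrow> real" and c :: real
  assumes c: "c \<noteq> 0"
  shows "integrable lborel (\<lambda>x. f (t + c *\<^sub>R x)) \<longleftrightarrow> integrable lborel f"
proof
  assume "integrable lborel (\<lambda>x. f (t + c *\<^sub>R x))"
  from integrable_affine_e[OF this, of "1/c" "- (1/c) *\<^sub>R t"] c show "integrable lborel f"
    by (simp add: algebra_simps)
qed (use integrable_affine_e c in auto)

lemma integral_affine_e:
  fixes f :: "'a::euclidean_space \<Rightarrow> real" and c :: real
  assumes c: "c \<noteq> 0"
  shows "(\<integral>x. f x \<partial>lborel) = \<bar>c\<bar>^DIM('a) * (\<integral>x. f (t + c *\<^sub>R x) \<partial>lborel)"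
proof cases
  assume f[measurable]: "integrable lborel f"
  then have fm[measurable]: "f \<in> borel_measurable borel" by auto
  show ?thesis
    using c f integrable_affine_e[OF f c, of t]
    by (subst lborel_affine[OF c, of t]) (simp add: integral_density integral_distr)
next
  assume "\<not> integrable lborel f" with c show ?thesis
    by (simp add: integrable_affine_e_iff not_integrable_integral_eq)
qed

lemma integral_translate:
  fixes f :: "'a::euclidean_space \<Rightarrow> real"
  shows "(\<integral>x. f x \<partial>lborel) = (\<integral>x. f (t + x) \<partial>lborel)"
  using integral_affine_e[of 1 f t] by simp

lemma integral_scale:
  fixes f :: "real^'n::finite \<Rightarrow> real" and c :: real
  assumes "c > 0"
  shows "(\<integral>x. f (c *\<^sub>R x) \<partial>lborel) = (\<integral>x. f x \<partial>lborel) / c ^ CARD('n)"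
  using integral_affine_e[of c f 0] assms by simp

definition cbs :: "(real^'n::finite \<Rightarrow> real) \<Rightarrow> bool" where
  "cbs f \<longleftrightarrow> continuous_on UNIV f \<and> bounded {x. f x \<noteq> 0}"

lemma cbs_integrable: "cbs f \<Longrightarrow> integrable lborel f"
proof -
  assume "cbs f"
  then have c: "continuous_on UNIV f" and b: "bounded {x. f x \<noteq> 0}" unfolding cbs_def by auto
  obtain a where a: "{x. f x \<noteq> 0} \<subseteq> cbox (-a) a"
    using bounded_subset_cbox_symmetric[OF b] by blast
  have "integrable lborel (\<lambda>x. indicator (cbox (-a) a) x *\<^sub>R f x)"
    by (rule borel_integrable_compact) (auto intro: continuous_on_subset[OF c])
  moreover have "(\<lambda>x. indicator (cbox (-a) a) x *\<^sub>R f x) = f"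
    using a by (force simp: fun_eq_iff indicator_def)
  ultimately show ?thesis by simp
qed

lemma cbs_measurable: "cbs f \<Longrightarrow> f \<in> borel_measurable lborel"
  using borel_measurable_integrable cbs_integrable by blast

lemma cbs_bounded: "cbs f \<Longrightarrow> \<exists>M. \<forall>x. \<bar>f x\<bar> \<le> M"
proof -
  assume "cbs f"
  then have c: "continuous_on UNIV f" and b: "bounded {x. f x \<noteq> 0}" unfolding cbs_def by auto
  obtain a where a: "{x. f x \<noteq> 0} \<subseteq> cbox (-a) a"
    using bounded_subset_cbox_symmetric[OF b] by blast
  have "compact (f ` cbox (-a) a)"
    by (rule compact_continuous_image) (auto intro: continuous_on_subset[OF c])
  then obtain M where M: "\<forall>y\<in>f ` cbox (-a) a. norm y \<le> M"
    using compact_imp_bounded bounded_iff by metis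
  have "\<bar>f x\<bar> \<le> max M 0" for x
    using M a by (cases "f x = 0") force+
  then show ?thesis by blast
qed

lemma cbs_support: "cbs f \<Longrightarrow> \<exists>R>0. \<forall>x. R \<le> norm x \<longrightarrow> f x = 0"
proof -
  assume "cbs f"
  then have b: "bounded {x. f x \<noteq> 0}" unfolding cbs_def by auto
  then obtain R where "\<forall>x\<in>{x. f x \<noteq> 0}. norm x \<le> R" using bounded_iff by metis
  then have "\<forall>x. max R 0 + 1 \<le> norm x \<longrightarrow> f x = 0" by force
  then show ?thesis by (intro exI[of _ "max R 0 + 1"]) auto
qed

lemma cbs_mult_cont: "cbs f \<Longrightarrow> continuous_on UNIV g \<Longrightarrow> cbs (\<lambda>x. f x * g x)"
  unfolding cbs_def by (auto intro: continuous_on_mult bounded_subset)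

lemma cbs_cont_mult: "cbs f \<Longrightarrow> continuous_on UNIV g \<Longrightarrow> cbs (\<lambda>x. g x * f x)"
  using cbs_mult_cont[of f g] by (simp add: mult.commute)

lemma cbs_compose_translate: "cbs f \<Longrightarrow> cbs (\<lambda>x. f (x + t))"
proof -
  assume "cbs f"
  then have c: "continuous_on UNIV f" and b: "bounded {x. f x \<noteq> 0}" unfolding cbs_def by auto
  have "continuous_on UNIV (\<lambda>x. f (x + t))"
    by (rule continuous_on_compose2[OF c]) (auto intro: continuous_intros)
  moreover have "{x. f (x + t) \<noteq> 0} = (\<lambda>x. x - t) ` {x. f x \<noteq> 0}"
    by (auto simp: image_iff intro: exI[of _ "_ + t"]) (metis add_diff_cancel)
  moreover have "bounded ((\<lambda>x. x - t) ` {x. f x \<noteq> 0})"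
    using bounded_translation[OF b, of "- t"] by simp
  ultimately show ?thesis unfolding cbs_def by simp
qed

lemma mvt_bound:
  fixes g g' :: "real \<Rightarrow> real"
  assumes d: "\<And>s. (g has_field_derivative g' s) (at s)" and M: "\<And>s. \<bar>g' s\<bar> \<le> M"
  shows "\<bar>g b - g a\<bar> \<le> M * \<bar>b - a\<bar>"
proof -
  have *: "\<bar>g v - g u\<bar> \<le> M * \<bar>v - u\<bar>" if uv: "u < v" for u v
  proof -
    obtain z where "g v - g u = (v - u) * g' z"
      using MVT2[OF uv, of g g'] d by blast
    then show ?thesis using M[of z] uv by (simp add: abs_mult mult.commute mult_left_mono)
  qed
  show ?thesis
    using *[of a b] *[of b a] by (cases a b rule: linorder_cases) (auto simp: abs_minus_commute)
qed

lemma line_shift_DERIV: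
  fixes g :: "'a::real_normed_vector \<Rightarrow> real"
  assumes "\<And>x. ((\<lambda>s. g (x + s *\<^sub>R e)) has_field_derivative g' x) (at 0)"
  shows "((\<lambda>s. g (x + s *\<^sub>R e)) has_field_derivative g' (x + s0 *\<^sub>R e)) (at s0)"
proof -
  have "((\<lambda>s. g ((x + s0 *\<^sub>R e) + s *\<^sub>R e)) has_field_derivative g' (x + s0 *\<^sub>R e)) (at 0)"
    by (rule assms)
  moreover have "(\<lambda>s. g (x + (s + s0) *\<^sub>R e)) = (\<lambda>s. g ((x + s0 *\<^sub>R e) + s *\<^sub>R e))"
    by (rule ext, rule arg_cong[where f=g]) (simp add: scaleR_add_left algebra_simps)
  ultimately have "((\<lambda>s. g (x + (s + s0) *\<^sub>R e)) has_field_derivative g' (x + s0 *\<^sub>R e)) (at 0)"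
    by simp
  then show ?thesis
    using DERIV_shift[of "\<lambda>s. g (x + s *\<^sub>R e)" "g' (x + s0 *\<^sub>R e)" 0 s0] by simp
qed

lemma integrable_const_cball:
  fixes C :: real
  shows "integrable lborel (\<lambda>x::real^'n::finite. indicator (cball 0 r) x *\<^sub>R C)"
  by (rule borel_integrable_compact) (auto intro: continuous_intros)

lemma weak_partial_C1:
  fixes f fi :: "real^'n::finite \<Rightarrow> real"
  assumes cf: "cbs f" and cfi: "cbs fi"
    and df: "\<And>x. ((\<lambda>s. f (x + s *\<^sub>R axis i 1)) has_field_derivative fi x) (at 0)"
  shows "has_weak_partial i f fi"
  unfolding has_weak_partial_def
proof (intro allI impI)
  fix \<phi> :: "real^'n \<Rightarrow> real" assume tf: "test_fun \<phi>"
  define e where "e = (axis i 1 :: real^'n)"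
  have ne: "norm e = 1" by (simp add: e_def)
  let ?pi = "cpartial i \<phi>"
  from tf have Ck1: "Ck (Suc 0) \<phi>" and b\<phi>: "bounded {x. \<phi> x \<noteq> 0}" unfolding test_fun_def by blast+
  then have c\<phi>: "continuous_on UNIV \<phi>" and dif\<phi>: "\<And>x. (\<lambda>t. \<phi> (x + t *\<^sub>R e)) differentiable (at 0)"
    and cpi: "continuous_on UNIV ?pi" by (auto simp: e_def)
  have d\<phi>: "((\<lambda>s. \<phi> (x + s *\<^sub>R e)) has_field_derivative ?pi x) (at 0)" for x
    using dif\<phi>[of x] unfolding cpartial_def e_def by (simp add: DERIV_deriv_iff_real_differentiable)
  have cbs\<phi>: "cbs \<phi>" using c\<phi> b\<phi> cbs_def by blast
  obtain R where R: "R > 0" "\<And>x. R \<le> norm x \<Longrightarrow> \<phi> x = 0"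
    using cbs_support[OF cbs\<phi>] by blast
  have far: "\<phi> (x + s *\<^sub>R e) = 0" if "norm x - \<bar>s\<bar> \<ge> R" for x s
  proof -
    have "norm x - norm (s *\<^sub>R e) \<le> norm (x + s *\<^sub>R e)" by (rule norm_diff_ineq)
    then show ?thesis using that ne R(2) by auto
  qed
  have pi0: "?pi x = 0" if x: "R < norm x" for x
  proof -
    have "((\<lambda>s. 0) has_field_derivative 0) (at 0)" by simp
    then have "((\<lambda>s. \<phi> (x + s *\<^sub>R e)) has_field_derivative 0) (at 0)"
    proof (rule has_field_derivative_transform_within_open[where S="ball 0 (norm x - R)"])
      show "open (ball 0 (norm x - R))" by simp
      show "0 \<in> ball 0 (norm x - R)" using x by simp
      fix s assume "s \<in> ball (0::real) (norm x - R)"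
      then have "\<bar>s\<bar> < norm x - R" by simp
      then show "0 = \<phi> (x + s *\<^sub>R e)" using far[of x s] by simp
    qed
    from DERIV_unique[OF d\<phi>[of x] this] show "?pi x = 0" .
  qed
  have cbspi: "cbs ?pi"
  proof -
    have "{x. ?pi x \<noteq> 0} \<subseteq> cball 0 R"
      using pi0 by (force simp: not_le)
    then show ?thesis unfolding cbs_def using cpi bounded_subset bounded_cball by blast
  qed
  obtain Mf where Mf: "\<And>x. \<bar>f x\<bar> \<le> Mf" using cbs_bounded[OF cf] by blast
  obtain Mfi where Mfi: "\<And>x. \<bar>fi x\<bar> \<le> Mfi" using cbs_bounded[OF cfi] by blast
  obtain Mp where Mp: "\<And>x. \<bar>\<phi> x\<bar> \<le> Mp" using cbs_bounded[OF cbs\<phi>] by blast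
  obtain Mpi where Mpi: "\<And>x. \<bar>?pi x\<bar> \<le> Mpi" using cbs_bounded[OF cbspi] by blast
  have cf': "continuous_on UNIV f" using cf cbs_def by blast
  define hk where "hk k = 1 / real (Suc k)" for k
  have hk_pos: "hk k > 0" and hk_le: "hk k \<le> 1" for k by (auto simp: hk_def)
  have hk_lim: "hk \<longlonglongrightarrow> 0"
    unfolding hk_def using LIMSEQ_inverse_real_of_nat by (simp add: inverse_eq_divide)
  have hk_at: "filterlim hk (at 0) sequentially"
    unfolding filterlim_at using hk_lim hk_pos by (auto intro!: always_eventually simp: less_imp_neq[symmetric])
  have hk_at': "filterlim (\<lambda>k. - hk k) (at 0) sequentially"
    unfolding filterlim_at using tendsto_minus[OF hk_lim] hk_pos by (auto intro!: always_eventually simp: less_imp_neq[symmetric])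
  have ident: "(\<integral>x. f x * ((\<phi> (x + hk k *\<^sub>R e) - \<phi> x) / hk k) \<partial>lborel)
      = (\<integral>x. ((f (x + (- hk k) *\<^sub>R e) - f x) / hk k) * \<phi> x \<partial>lborel)" for k
  proof -
    let ?h = "hk k"
    have i1: "integrable lborel (\<lambda>x. f x * \<phi> (x + ?h *\<^sub>R e))"
      by (rule cbs_integrable, rule cbs_cont_mult[OF cbs_compose_translate[OF cbs\<phi>] cf'])
    have i2: "integrable lborel (\<lambda>x. f x * \<phi> x)"
      by (rule cbs_integrable, rule cbs_cont_mult[OF cbs\<phi> cf'])
    have i3: "integrable lborel (\<lambda>x. f (x + (- ?h) *\<^sub>R e) * \<phi> x)"
      by (rule cbs_integrable, rule cbs_cont_mult[OF cbs\<phi>])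
         (rule continuous_on_compose2[OF cf'], auto intro: continuous_intros)
    have A: "(\<integral>x. f x * \<phi> (x + ?h *\<^sub>R e) \<partial>lborel) = (\<integral>x. f (x + (- ?h) *\<^sub>R e) * \<phi> x \<partial>lborel)"
      using integral_translate[of "\<lambda>x. f x * \<phi> (x + ?h *\<^sub>R e)" "(- ?h) *\<^sub>R e"]
      by (simp add: algebra_simps)
    have "(\<integral>x. f x * ((\<phi> (x + ?h *\<^sub>R e) - \<phi> x) / ?h) \<partial>lborel)
        = (\<integral>x. (f x * \<phi> (x + ?h *\<^sub>R e) - f x * \<phi> x) / ?h \<partial>lborel)"
      by (simp add: algebra_simps)
    also have "\<dots> = ((\<integral>x. f x * \<phi> (x + ?h *\<^sub>R e) \<partial>lborel) - (\<integral>x. f x * \<phi> x \<partial>lborel)) / ?h"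
      using i1 i2 by simp
    also have "\<dots> = ((\<integral>x. f (x + (- ?h) *\<^sub>R e) * \<phi> x \<partial>lborel) - (\<integral>x. f x * \<phi> x \<partial>lborel)) / ?h"
      by (simp add: A)
    also have "\<dots> = (\<integral>x. (f (x + (- ?h) *\<^sub>R e) * \<phi> x - f x * \<phi> x) / ?h \<partial>lborel)"
      using i3 i2 by simp
    also have "\<dots> = (\<integral>x. ((f (x + (- ?h) *\<^sub>R e) - f x) / ?h) * \<phi> x \<partial>lborel)"
      by (simp add: algebra_simps)
    finally show ?thesis .
  qed
  have limL: "(\<lambda>k. \<integral>x. f x * ((\<phi> (x + hk k *\<^sub>R e) - \<phi> x) / hk k) \<partial>lborel) \<longlonglongrightarrow> (\<integral>x. f x * ?pi x \<partial>lborel)"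
  proof (rule integral_dominated_convergence[where w="\<lambda>x. indicator (cball 0 (R + 1)) x *\<^sub>R (Mf * Mpi)"])
    show "(\<lambda>x. f x * ?pi x) \<in> borel_measurable lborel"
      by (rule cbs_measurable, rule cbs_cont_mult[OF cbspi cf'])
    show "(\<lambda>x. f x * ((\<phi> (x + hk k *\<^sub>R e) - \<phi> x) / hk k)) \<in> borel_measurable lborel" for k
    proof -
      have "continuous_on UNIV (\<lambda>x. \<phi> (x + hk k *\<^sub>R e))"
        by (rule continuous_on_compose2[OF c\<phi>]) (auto intro: continuous_intros)
      then have "continuous_on UNIV (\<lambda>x. f x * ((\<phi> (x + hk k *\<^sub>R e) - \<phi> x) / hk k))"
        using cf' c\<phi> hk_pos[of k] by (intro continuous_intros) auto
      then show ?thesis using borel_measurable_continuous_onI by simp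
    qed
    show "integrable lborel (\<lambda>x. indicator (cball 0 (R + 1)) x *\<^sub>R (Mf * Mpi))"
      by (rule borel_integrable_compact) (auto intro: continuous_intros)
    show "AE x in lborel. (\<lambda>k. f x * ((\<phi> (x + hk k *\<^sub>R e) - \<phi> x) / hk k)) \<longlonglongrightarrow> f x * ?pi x"
    proof (intro AE_I2 tendsto_mult tendsto_const)
      fix x
      have "((\<lambda>y. (\<phi> (x + y *\<^sub>R e) - \<phi> x) / y) \<longlongrightarrow> ?pi x) (at 0)"
        using d\<phi>[of x] unfolding has_field_derivative_iff by simp
      from filterlim_compose[OF this hk_at]
      show "(\<lambda>k. (\<phi> (x + hk k *\<^sub>R e) - \<phi> x) / hk k) \<longlonglongrightarrow> ?pi x" .
    qed
    show "AE x in lborel. norm (f x * ((\<phi> (x + hk k *\<^sub>R e) - \<phi> x) / hk k)) \<le> indicator (cball 0 (R + 1)) x *\<^sub>R (Mf * Mpi)" for k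
    proof (intro AE_I2)
      fix x
      have mv: "\<bar>\<phi> (x + hk k *\<^sub>R e) - \<phi> (x + 0 *\<^sub>R e)\<bar> \<le> Mpi * \<bar>hk k - 0\<bar>"
        by (rule mvt_bound[where g="\<lambda>s. \<phi> (x + s *\<^sub>R e)" and g'="\<lambda>s. ?pi (x + s *\<^sub>R e)"])
           (auto intro: line_shift_DERIV d\<phi> Mpi)
      show "norm (f x * ((\<phi> (x + hk k *\<^sub>R e) - \<phi> x) / hk k)) \<le> indicator (cball 0 (R + 1)) x *\<^sub>R (Mf * Mpi)"
      proof (cases "x \<in> cball 0 (R + 1)")
        case True
        have "\<bar>(\<phi> (x + hk k *\<^sub>R e) - \<phi> x) / hk k\<bar> \<le> Mpi"
          using mv hk_pos[of k] by (simp add: abs_div pos_divide_le_eq)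
        then have "\<bar>f x\<bar> * \<bar>(\<phi> (x + hk k *\<^sub>R e) - \<phi> x) / hk k\<bar> \<le> Mf * Mpi"
          using Mf[of x] by (intro mult_mono) auto
        then show ?thesis using True by (simp add: abs_mult)
      next
        case False
        then have "norm x > R + 1" by simp
        then have "\<phi> (x + hk k *\<^sub>R e) = 0" "\<phi> x = 0"
          using far[of x "hk k"] hk_le[of k] hk_pos[of k] R(2)[of x] by auto
        then show ?thesis using False by simp
      qed
    qed
  qed
  have limR: "(\<lambda>k. \<integral>x. ((f (x + (- hk k) *\<^sub>R e) - f x) / hk k) * \<phi> x \<partial>lborel) \<longlonglongrightarrow> (\<integral>x. (- fi x) * \<phi> x \<partial>lborel)"
  proof (rule integral_dominated_convergence[where w="\<lambda>x. indicator (cball 0 R) x *\<^sub>R (Mfi * Mp)"])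
    show "(\<lambda>x. (- fi x) * \<phi> x) \<in> borel_measurable lborel"
      using cbs_measurable[OF cfi] cbs_measurable[OF cbs\<phi>] by measurable
    show "(\<lambda>x. ((f (x + (- hk k) *\<^sub>R e) - f x) / hk k) * \<phi> x) \<in> borel_measurable lborel" for k
    proof -
      have "continuous_on UNIV (\<lambda>x. f (x + (- hk k) *\<^sub>R e))"
        by (rule continuous_on_compose2[OF cf']) (auto intro: continuous_intros)
      then have "continuous_on UNIV (\<lambda>x. ((f (x + (- hk k) *\<^sub>R e) - f x) / hk k) * \<phi> x)"
        using cf' c\<phi> hk_pos[of k] by (intro continuous_intros) auto
      then show ?thesis using borel_measurable_continuous_onI by simp
    qed
    show "integrable lborel (\<lambda>x. indicator (cball 0 R) x *\<^sub>R (Mfi * Mp))"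
      by (rule borel_integrable_compact) (auto intro: continuous_intros)
    show "AE x in lborel. (\<lambda>k. ((f (x + (- hk k) *\<^sub>R e) - f x) / hk k) * \<phi> x) \<longlonglongrightarrow> (- fi x) * \<phi> x"
    proof (intro AE_I2 tendsto_mult tendsto_const)
      fix x
      have "((\<lambda>y. (f (x + y *\<^sub>R e) - f x) / y) \<longlongrightarrow> fi x) (at 0)"
        using df[of x] unfolding has_field_derivative_iff e_def by simp
      from filterlim_compose[OF this hk_at']
      have "(\<lambda>k. (f (x + (- hk k) *\<^sub>R e) - f x) / (- hk k)) \<longlonglongrightarrow> fi x" .
      from tendsto_minus[OF this]
      show "(\<lambda>k. (f (x + (- hk k) *\<^sub>R e) - f x) / hk k) \<longlonglongrightarrow> - fi x" by simp
    qed
    show "AE x in lborel. norm (((f (x + (- hk k) *\<^sub>R e) - f x) / hk k) * \<phi> x) \<le> indicator (cball 0 R) x *\<^sub>R (Mfi * Mp)" for k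
    proof (intro AE_I2)
      fix x
      have df': "((\<lambda>s. f (y + s *\<^sub>R e)) has_field_derivative fi y) (at 0)" for y
        using df[of y] unfolding e_def .
      have mv: "\<bar>f (x + (- hk k) *\<^sub>R e) - f (x + 0 *\<^sub>R e)\<bar> \<le> Mfi * \<bar>(- hk k) - 0\<bar>"
        by (rule mvt_bound[where g="\<lambda>s. f (x + s *\<^sub>R e)" and g'="\<lambda>s. fi (x + s *\<^sub>R e)"])
           (auto intro: line_shift_DERIV df' Mfi)
      show "norm (((f (x + (- hk k) *\<^sub>R e) - f x) / hk k) * \<phi> x) \<le> indicator (cball 0 R) x *\<^sub>R (Mfi * Mp)"
      proof (cases "x \<in> cball 0 R")
        case True
        have "\<bar>(f (x + (- hk k) *\<^sub>R e) - f x) / hk k\<bar> \<le> Mfi"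
          using mv hk_pos[of k] by (simp add: abs_div pos_divide_le_eq)
        then have "\<bar>(f (x + (- hk k) *\<^sub>R e) - f x) / hk k\<bar> * \<bar>\<phi> x\<bar> \<le> Mfi * Mp"
          using Mp[of x] order_trans[OF abs_ge_zero Mfi] by (intro mult_mono) auto
        then show ?thesis using True by (simp add: abs_mult)
      next
        case False
        then have "\<phi> x = 0" using R(2)[of x] by simp
        then show ?thesis using False by simp
      qed
    qed
  qed
  have "(\<integral>x. f x * ?pi x \<partial>lborel) = (\<integral>x. (- fi x) * \<phi> x \<partial>lborel)"
    using LIMSEQ_unique[OF limL] limR unfolding ident by blast
  then show "(\<integral>x. f x * cpartial i \<phi> x \<partial>lborel) = - (\<integral>x. fi x * \<phi> x \<partial>lborel)"
    by simp
qed

lemma abs_powr2: "\<bar>y::real\<bar> powr 2 = y\<^sup>2"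
  by (cases "y = 0") (auto simp: powr_numeral)

lemma inLp2_iff: "inLp 2 v \<longleftrightarrow> v \<in> borel_measurable lborel \<and> integrable lborel (\<lambda>x. (v x)\<^sup>2)"
  unfolding inLp_def abs_powr2 ..

lemma Lnorm2_sq: "(Lnorm 2 v)\<^sup>2 = (\<integral>x. (v x)\<^sup>2 \<partial>lborel)"
proof -
  have "(\<integral>x. (v x)\<^sup>2 \<partial>lborel) \<ge> 0" by (intro integral_nonneg_AE AE_I2) simp
  then show ?thesis unfolding Lnorm_def abs_powr2 by (simp add: powr_half_sqrt)
qed

lemma test_cbs: "test_fun \<phi> \<Longrightarrow> cbs \<phi>"
  unfolding test_fun_def cbs_def by (metis Ck.simps(1))

lemma cbs_inLp2: "cbs f \<Longrightarrow> inLp 2 f"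
proof -
  assume f: "cbs f"
  have "cbs (\<lambda>x. f x * f x)"
    using f by (rule cbs_mult_cont) (use f in \<open>auto simp: cbs_def\<close>)
  then show ?thesis
    unfolding inLp2_iff using cbs_measurable[OF f] cbs_integrable by (simp add: power2_eq_square)
qed

lemma L2_mult_integrable:
  assumes v: "inLp 2 v" and w: "inLp 2 w"
  shows "integrable lborel (\<lambda>x. v x * w x)"
proof (rule Bochner_Integration.integrable_bound[where f="\<lambda>x. (v x)\<^sup>2 + (w x)\<^sup>2"])
  show "integrable lborel (\<lambda>x. (v x)\<^sup>2 + (w x)\<^sup>2)" using v w unfolding inLp2_iff by auto
  show "(\<lambda>x. v x * w x) \<in> borel_measurable lborel" using v w unfolding inLp2_iff by auto
  show "AE x in lborel. norm (v x * w x) \<le> norm ((v x)\<^sup>2 + (w x)\<^sup>2)"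
  proof (intro AE_I2)
    fix x
    have "2 * \<bar>v x\<bar> * \<bar>w x\<bar> \<le> (v x)\<^sup>2 + (w x)\<^sup>2"
      using sum_squares_bound[of "\<bar>v x\<bar>" "\<bar>w x\<bar>"] by (simp add: power2_eq_square)
    moreover have "\<bar>v x\<bar> * \<bar>w x\<bar> \<ge> 0" by simp
    ultimately have "\<bar>v x\<bar> * \<bar>w x\<bar> \<le> (v x)\<^sup>2 + (w x)\<^sup>2" by linarith
    then show "norm (v x * w x) \<le> norm ((v x)\<^sup>2 + (w x)\<^sup>2)" by (simp add: abs_mult)
  qed
qed

lemma weak_unique:
  fixes u v w :: "real^'n::finite \<Rightarrow> real"
  assumes v: "inLp 2 v" and w: "inLp 2 w"
    and hv: "has_weak_partial i u v" and hw: "has_weak_partial i u w"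
  shows "AE x in lborel. v x = w x"
proof -
  let ?h = "\<lambda>x. v x - w x"
  have vm: "v \<in> borel_measurable lborel" and wm: "w \<in> borel_measurable lborel"
    using v w unfolding inLp2_iff by auto
  have "AE x in lborel. ?h x = 0"
  proof (rule FL)
    show "?h \<in> borel_measurable lborel" using vm wm by measurable
    fix a b :: "real^'n"
    have ib: "inLp 2 (indicator (box a b) :: real^'n \<Rightarrow> real)"
    proof -
      have e: "(\<lambda>x. (indicator (box a b) x :: real)\<^sup>2) = indicator (box a b)"
        by (auto simp: indicator_def fun_eq_iff)
      have "integrable lborel (indicator (box a b) :: real^'n \<Rightarrow> real)"
        using integrable_real_indicator[OF _ emeasure_lborel_box_finite[of a b]] by simp
      then show ?thesis unfolding inLp2_iff e by auto
    qed
    have "integrable lborel (\<lambda>x. v x * indicator (box a b) x - w x * indicator (box a b) x)"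
      using L2_mult_integrable[OF v ib] L2_mult_integrable[OF w ib] by auto
    moreover have "(\<lambda>x. v x * indicator (box a b) x - w x * indicator (box a b) x) = (\<lambda>x. ?h x * indicator (box a b) x)"
      by (auto simp: fun_eq_iff algebra_simps)
    ultimately show "integrable lborel (\<lambda>x. ?h x * indicator (box a b) x)" by simp
  next
    fix \<phi> :: "real^'n \<Rightarrow> real" assume tf: "test_fun \<phi>"
    have p: "inLp 2 \<phi>" by (rule cbs_inLp2[OF test_cbs[OF tf]])
    have "(\<integral>x. v x * \<phi> x \<partial>lborel) = (\<integral>x. w x * \<phi> x \<partial>lborel)"
      using hv hw tf unfolding has_weak_partial_def by (metis neg_equal_iff_equal)
    then show "(\<integral>x. ?h x * \<phi> x \<partial>lborel) = 0"
      using L2_mult_integrable[OF v p] L2_mult_integrable[OF w p] by (simp add: left_diff_distrib)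
  qed
  then show ?thesis by auto
qed

lemma wpartial_ae:
  assumes "inLp 2 v" "has_weak_partial i u v"
  shows "AE x in lborel. wpartial i u x = v x"
proof -
  have "inLp 2 (wpartial i u) \<and> has_weak_partial i u (wpartial i u)"
    unfolding wpartial_def by (rule someI[of _ v]) (use assms in auto)
  then show ?thesis using weak_unique assms by blast
qed

lemma wpartial_inLp:
  assumes "inLp 2 v" "has_weak_partial i u v"
  shows "inLp 2 (wpartial i u)"
proof -
  have "inLp 2 (wpartial i u) \<and> has_weak_partial i u (wpartial i u)"
    unfolding wpartial_def by (rule someI[of _ v]) (use assms in auto)
  then show ?thesis by blast
qed

lemma has_weak_partial_cong:
  assumes um: "u \<in> borel_measurable lborel" and u'm: "u' \<in> borel_measurable lborel"
    and ae: "AE x in lborel. u x = u' x" and h: "has_weak_partial i u v"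
  shows "has_weak_partial i u' v"
  unfolding has_weak_partial_def
proof (intro allI impI)
  fix \<phi> :: "real^'a \<Rightarrow> real" assume tf: "test_fun \<phi>"
  have c: "continuous_on UNIV (cpartial i \<phi>)"
    using tf unfolding test_fun_def by (metis Ck.simps(1) Ck.simps(2))
  then have cm: "cpartial i \<phi> \<in> borel_measurable lborel"
    using borel_measurable_continuous_onI by simp
  have "(\<integral>x. u' x * cpartial i \<phi> x \<partial>lborel) = (\<integral>x. u x * cpartial i \<phi> x \<partial>lborel)"
    by (rule integral_cong_AE) (use um u'm cm ae in \<open>auto\<close>)
  then show "(\<integral>x. u' x * cpartial i \<phi> x \<partial>lborel) = - (\<integral>x. v x * \<phi> x \<partial>lborel)"
    using h tf unfolding has_weak_partial_def by simp
qed

lemma Lnorm_cong_AE: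
  assumes "f \<in> borel_measurable lborel" "g \<in> borel_measurable lborel" "AE x in lborel. f x = g x"
  shows "Lnorm q f = Lnorm q g"
  unfolding Lnorm_def
  by (subst integral_cong_AE[where g="\<lambda>x. \<bar>g x\<bar> powr q"]) (use assms in auto)

definition P2f :: "real \<Rightarrow> real" where "P2f z = (max 0 z)\<^sup>2"
definition P3f :: "real \<Rightarrow> real" where "P3f z = (max 0 z) ^ 3"

lemma P2f_DERIV: "(P2f has_field_derivative 2 * max 0 z) (at z)"
proof (cases z "0::real" rule: linorder_cases)
  case less
  have "((\<lambda>z. 0) has_field_derivative 0) (at z)" by simp
  then have "(P2f has_field_derivative 0) (at z)"
    by (rule has_field_derivative_transform_within_open[where S="{..<0}"]) (use less in \<open>auto simp: P2f_def\<close>)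
  then show ?thesis using less by simp
next
  case greater
  have "((\<lambda>z. z\<^sup>2) has_field_derivative 2 * z) (at z)" by (auto intro!: derivative_eq_intros)
  then have "(P2f has_field_derivative 2 * z) (at z)"
    by (rule has_field_derivative_transform_within_open[where S="{0<..}"]) (use greater in \<open>auto simp: P2f_def\<close>)
  then show ?thesis using greater by simp
next
  case equal
  have "((\<lambda>h. max 0 h) \<longlongrightarrow> max 0 0) (at (0::real))"
    by (intro tendsto_intros)
  then have "((\<lambda>h. max 0 h) \<longlongrightarrow> 0) (at (0::real))" by simp
  moreover have "\<forall>\<^sub>F h in at 0. max 0 h = (P2f h - P2f 0) / (h - 0)"
  proof -
    have "max 0 h = (P2f h - P2f 0) / (h - 0)" if "h \<noteq> 0" for h :: real
    proof (cases "h > 0")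
      case True then show ?thesis by (simp add: P2f_def power2_eq_square)
    next
      case False then show ?thesis by (simp add: P2f_def max_absorb1)
    qed
    then show ?thesis unfolding eventually_at_filter by (intro always_eventually) auto
  qed
  ultimately have "((\<lambda>h. (P2f h - P2f 0) / (h - 0)) \<longlongrightarrow> 0) (at 0)"
    by (rule Lim_transform_eventually)
  then have "(P2f has_field_derivative 0) (at 0)" unfolding has_field_derivative_iff by simp
  then show ?thesis using equal by simp
qed

lemma P3f_DERIV: "(P3f has_field_derivative 3 * P2f z) (at z)"
proof (cases z "0::real" rule: linorder_cases)
  case less
  have "((\<lambda>z. 0) has_field_derivative 0) (at z)" by simp
  then have "(P3f has_field_derivative 0) (at z)"
    by (rule has_field_derivative_transform_within_open[where S="{..<0}"]) (use less in \<open>auto simp: P3f_def\<close>)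
  then show ?thesis using less by (simp add: P2f_def)
next
  case greater
  have "((\<lambda>z. z ^ 3) has_field_derivative 3 * z\<^sup>2) (at z)" by (auto intro!: derivative_eq_intros)
  then have "(P3f has_field_derivative 3 * z\<^sup>2) (at z)"
    by (rule has_field_derivative_transform_within_open[where S="{0<..}"]) (use greater in \<open>auto simp: P3f_def\<close>)
  then show ?thesis using greater by (simp add: P2f_def)
next
  case equal
  have "((\<lambda>h. (max 0 h)\<^sup>2) \<longlongrightarrow> (max 0 0)\<^sup>2) (at (0::real))"
    by (intro tendsto_intros)
  then have "((\<lambda>h. (max 0 h)\<^sup>2) \<longlongrightarrow> 0) (at (0::real))" by simp
  moreover have "\<forall>\<^sub>F h in at 0. (max 0 h)\<^sup>2 = (P3f h - P3f 0) / (h - 0)"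
  proof -
    have "(max 0 h)\<^sup>2 = (P3f h - P3f 0) / (h - 0)" if "h \<noteq> 0" for h :: real
    proof (cases "h > 0")
      case True then show ?thesis by (simp add: P3f_def power2_eq_square power3_eq_cube)
    next
      case False then show ?thesis by (simp add: P3f_def max_absorb1)
    qed
    then show ?thesis unfolding eventually_at_filter by (intro always_eventually) auto
  qed
  ultimately have "((\<lambda>h. (P3f h - P3f 0) / (h - 0)) \<longlongrightarrow> 0) (at 0)"
    by (rule Lim_transform_eventually)
  then have "(P3f has_field_derivative 0) (at 0)" unfolding has_field_derivative_iff by simp
  then show ?thesis using equal by (simp add: P2f_def)
qed

lemma P2f_DERIV_chain[derivative_intros]:
  "(g has_field_derivative g') (at x within S) \<Longrightarrow> ((\<lambda>x. P2f (g x)) has_field_derivative 2 * max 0 (g x) * g') (at x within S)"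
  by (rule DERIV_chain'[OF _ P2f_DERIV])

lemma P3f_DERIV_chain[derivative_intros]:
  "(g has_field_derivative g') (at x within S) \<Longrightarrow> ((\<lambda>x. P3f (g x)) has_field_derivative 3 * P2f (g x) * g') (at x within S)"
  by (rule DERIV_chain'[OF _ P3f_DERIV])

lemma P2f_cont[continuous_intros]: "continuous_on S g \<Longrightarrow> continuous_on S (\<lambda>x. P2f (g x))"
  unfolding P2f_def by (intro continuous_intros)

lemma P3f_cont[continuous_intros]: "continuous_on S g \<Longrightarrow> continuous_on S (\<lambda>x. P3f (g x))"
  unfolding P3f_def by (intro continuous_intros)

lemma vec_nth_cont[continuous_intros]: "continuous_on S (\<lambda>x::real^'n. x $ i)"
  by (rule linear_continuous_on[OF bounded_linear_vec_nth])

lemma line_inner_DERIV: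
  "((\<lambda>s. (x + s *\<^sub>R axis j 1) \<bullet> (x + s *\<^sub>R axis j (1::real))) has_field_derivative 2 * (x $ j)) (at 0)"
proof -
  have e: "(x + s *\<^sub>R axis j 1) \<bullet> (x + s *\<^sub>R axis j 1) = x \<bullet> x + 2 * s * (x $ j) + s\<^sup>2" for s
    by (simp add: inner_add_left inner_add_right inner_axis inner_axis' axis_nth power2_eq_square algebra_simps
          inner_commute[of "axis j 1" x])
  show ?thesis unfolding e by (auto intro!: derivative_eq_intros)
qed

lemma line_nth_DERIV:
  "((\<lambda>s. (x + s *\<^sub>R axis j 1) $ i) has_field_derivative (if i = j then 1 else 0)) (at 0)"
proof -
  have e: "(x + s *\<^sub>R axis j 1) $ i = x $ i + s * (if i = j then 1 else 0)" for s
    by (simp add: axis_def)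
  show ?thesis unfolding e by (auto intro!: derivative_eq_intros)
qed

definition qf :: "real \<Rightarrow> real^'n::finite \<Rightarrow> real" where "qf t x = 1 - t\<^sup>2 * (x \<bullet> x)"

definition U :: "real \<Rightarrow> real \<Rightarrow> real^'n::finite \<Rightarrow> real" where
  "U a t x = a * P3f (qf t x)"

definition D1 :: "real \<Rightarrow> real \<Rightarrow> 'n \<Rightarrow> real^'n::finite \<Rightarrow> real" where
  "D1 a t i x = - 6 * a * t\<^sup>2 * (x $ i) * P2f (qf t x)"

definition D2 :: "real \<Rightarrow> real \<Rightarrow> 'n \<Rightarrow> 'n \<Rightarrow> real^'n::finite \<Rightarrow> real" where
  "D2 a t i j x = - 6 * a * t\<^sup>2 * (if i = j then 1 else 0) * P2f (qf t x)
      + 24 * a * t ^ 4 * (x $ i) * (x $ j) * max 0 (qf t x)"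

lemma qf_line_DERIV:
  "((\<lambda>s. qf t (x + s *\<^sub>R axis j 1)) has_field_derivative - (t\<^sup>2 * (2 * (x $ j)))) (at 0)"
  unfolding qf_def by (auto intro!: derivative_eq_intros line_inner_DERIV)

lemma U_line_DERIV:
  "((\<lambda>s. U a t (x + s *\<^sub>R axis j 1)) has_field_derivative D1 a t j x) (at 0)"
proof -
  have "((\<lambda>s. P3f (qf t (x + s *\<^sub>R axis j 1))) has_field_derivative
      3 * P2f (qf t (x + 0 *\<^sub>R axis j 1)) * - (t\<^sup>2 * (2 * (x $ j)))) (at 0)"
    by (rule P3f_DERIV_chain[OF qf_line_DERIV])
  from DERIV_cmult[OF this, of a] show ?thesis
    by (simp add: U_def D1_def algebra_simps)
qed

lemma D1_line_DERIV:
  "((\<lambda>s. D1 a t i (x + s *\<^sub>R axis j 1)) has_field_derivative D2 a t i j x) (at 0)"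
proof -
  have B: "((\<lambda>s. P2f (qf t (x + s *\<^sub>R axis j 1))) has_field_derivative
      2 * max 0 (qf t (x + 0 *\<^sub>R axis j 1)) * - (t\<^sup>2 * (2 * (x $ j)))) (at 0)"
    by (rule P2f_DERIV_chain[OF qf_line_DERIV])
  from DERIV_mult[OF line_nth_DERIV B]
  have "((\<lambda>s. (x + s *\<^sub>R axis j 1) $ i * P2f (qf t (x + s *\<^sub>R axis j 1))) has_field_derivative
     (if i = j then 1 else 0) * P2f (qf t (x + 0 *\<^sub>R axis j 1)) +
     2 * max 0 (qf t (x + 0 *\<^sub>R axis j 1)) * - (t\<^sup>2 * (2 * (x $ j))) * (x + 0 *\<^sub>R axis j 1) $ i) (at 0)" .
  from DERIV_cmult[OF this, of "- 6 * a * t\<^sup>2"]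
  have "((\<lambda>s. - 6 * a * t\<^sup>2 * ((x + s *\<^sub>R axis j 1) $ i * P2f (qf t (x + s *\<^sub>R axis j 1)))) has_field_derivative
      D2 a t i j x) (at 0)"
    by (simp add: D2_def algebra_simps power4_eq_xxxx power2_eq_square)
  moreover have "(\<lambda>s. - 6 * a * t\<^sup>2 * ((x + s *\<^sub>R axis j 1) $ i * P2f (qf t (x + s *\<^sub>R axis j 1))))
      = (\<lambda>s. D1 a t i (x + s *\<^sub>R axis j 1))"
    by (simp add: D1_def fun_eq_iff)
  ultimately show ?thesis by simp
qed

lemma qf_neg: "t \<noteq> 0 \<Longrightarrow> 1 / \<bar>t\<bar> < norm x \<Longrightarrow> qf t x < 0"
proof -
  assume t: "t \<noteq> 0" and x: "1 / \<bar>t\<bar> < norm x"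
  then have "1 < \<bar>t\<bar> * norm x" by (simp add: field_simps)
  then have "1 < (\<bar>t\<bar> * norm x)\<^sup>2"
    by (metis abs_ge_zero less_1_mult mult_nonneg_nonneg power2_eq_square)
  then show ?thesis by (simp add: qf_def power_mult_distrib dot_square_norm)
qed

lemma cbs_of_support:
  assumes "continuous_on UNIV f" "\<And>x. r < norm x \<Longrightarrow> f x = 0"
  shows "cbs f"
proof -
  have "{x. f x \<noteq> 0} \<subseteq> cball 0 r" using assms(2) by (force simp: not_le)
  then show ?thesis unfolding cbs_def using assms(1) bounded_subset bounded_cball by blast
qed

lemma cont_qf[continuous_intros]: "continuous_on S (qf t)"
  unfolding qf_def by (intro continuous_intros)

lemma P_neg: "z < 0 \<Longrightarrow> P3f z = 0" "z < 0 \<Longrightarrow> P2f z = 0" "z < 0 \<Longrightarrow> max 0 z = (0::real)"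
  by (simp_all add: P3f_def P2f_def max_absorb1)

lemma cbs_U: "t \<noteq> 0 \<Longrightarrow> cbs (U a t)"
proof (rule cbs_of_support[where r="1/\<bar>t\<bar>"])
  show "continuous_on UNIV (U a t)" unfolding U_def by (intro continuous_intros)
  fix x :: "real^'a" assume "t \<noteq> 0" "1 / \<bar>t\<bar> < norm x"
  from qf_neg[OF this] show "U a t x = 0" by (simp add: U_def P_neg)
qed

lemma cbs_D1: "t \<noteq> 0 \<Longrightarrow> cbs (D1 a t i)"
proof (rule cbs_of_support[where r="1/\<bar>t\<bar>"])
  show "continuous_on UNIV (D1 a t i)" unfolding D1_def by (intro continuous_intros)
  fix x :: "real^'a" assume "t \<noteq> 0" "1 / \<bar>t\<bar> < norm x"
  from qf_neg[OF this] show "D1 a t i x = 0" by (simp add: D1_def P_neg)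
qed

lemma cbs_D2: "t \<noteq> 0 \<Longrightarrow> cbs (D2 a t i j)"
proof (rule cbs_of_support[where r="1/\<bar>t\<bar>"])
  show "continuous_on UNIV (D2 a t i j)" unfolding D2_def by (intro continuous_intros)
  fix x :: "real^'a" assume "t \<noteq> 0" "1 / \<bar>t\<bar> < norm x"
  from qf_neg[OF this] show "D2 a t i j x = 0" by (simp add: D2_def P_neg)
qed

lemma weak_U: "t \<noteq> 0 \<Longrightarrow> has_weak_partial j (U a t) (D1 a t j)"
proof -
  assume t: "t \<noteq> 0"
  show ?thesis using weak_partial_C1[OF cbs_U[OF t] cbs_D1[OF t] U_line_DERIV] .
qed

lemma weak_D1: "t \<noteq> 0 \<Longrightarrow> has_weak_partial j (D1 a t i) (D2 a t i j)"
proof -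
  assume t: "t \<noteq> 0"
  show ?thesis using weak_partial_C1[OF cbs_D1[OF t] cbs_D2[OF t] D1_line_DERIV] .
qed

lemma U_H2: "t \<noteq> 0 \<Longrightarrow> U a t \<in> H2"
proof -
  assume t: "t \<noteq> 0"
  have "\<forall>i. \<exists>v. inLp 2 v \<and> has_weak_partial i (U a t) v \<and> (\<forall>j. \<exists>w. inLp 2 w \<and> has_weak_partial j v w)"
  proof
    fix i
    have "\<forall>j. \<exists>w. inLp 2 w \<and> has_weak_partial j (D1 a t i) w"
    proof
      fix j
      show "\<exists>w. inLp 2 w \<and> has_weak_partial j (D1 a t i) w"
        using cbs_inLp2[OF cbs_D2[OF t]] weak_D1[OF t] by blast
    qed
    then show "\<exists>v. inLp 2 v \<and> has_weak_partial i (U a t) v \<and> (\<forall>j. \<exists>w. inLp 2 w \<and> has_weak_partial j v w)"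
      using cbs_inLp2[OF cbs_D1[OF t]] weak_U[OF t] by blast
  qed
  then show ?thesis unfolding H2_def using cbs_inLp2[OF cbs_U[OF t]] by blast
qed

lemma U_radial: "a \<ge> 0 \<Longrightarrow> radially_decreasing (U a t)"
  unfolding radially_decreasing_def
proof (intro allI impI)
  fix x y :: "real^'a" assume a: "a \<ge> 0" and xy: "norm x \<le> norm y"
  have "x \<bullet> x \<le> y \<bullet> y"
    using xy by (simp add: dot_square_norm power_mono)
  then have "qf t y \<le> qf t x"
    unfolding qf_def by (simp add: mult_left_mono)
  then have "P3f (qf t y) \<le> P3f (qf t x)"
    unfolding P3f_def by (intro power_mono) auto
  then show "U a t y \<le> U a t x"
    unfolding U_def using a by (simp add: mult_left_mono)
qed

lemma U_H2r: "t \<noteq> 0 \<Longrightarrow> a \<ge> 0 \<Longrightarrow> U a t \<in> H2r"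
  unfolding H2r_def using U_H2 U_radial by blast

lemma qf_scale: "qf 1 (t *\<^sub>R x) = qf t x"
  by (simp add: qf_def power2_eq_square mult.assoc)

lemma U_scale: "U a t x = a * U 1 1 (t *\<^sub>R x)"
  by (simp add: U_def qf_scale)

lemma D1_scale: "D1 a t i x = a * t * D1 1 1 i (t *\<^sub>R x)"
  by (simp add: D1_def qf_scale power2_eq_square)

lemma D2_scale: "D2 a t i j x = a * t\<^sup>2 * D2 1 1 i j (t *\<^sub>R x)"
  by (simp add: D2_def qf_scale power2_eq_square power4_eq_xxxx algebra_simps)

lemma Lnorm_pow: "p > 0 \<Longrightarrow> Lnorm p u powr p = (\<integral>x. \<bar>u x\<bar> powr p \<partial>lborel)"
proof -
  assume p: "p > 0"
  have "(\<integral>x. \<bar>u x\<bar> powr p \<partial>lborel) \<ge> 0" by (intro integral_nonneg_AE AE_I2) simp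
  then show ?thesis unfolding Lnorm_def using p by (simp add: powr_powr)
qed

lemma wpartial_U_ae:
  assumes t: "t \<noteq> 0"
  shows "AE x in lborel. wpartial i (U a t) x = D1 a t i x"
    and "inLp 2 (wpartial i (U a t))"
  using wpartial_ae[OF cbs_inLp2[OF cbs_D1[OF t]] weak_U[OF t]]
    wpartial_inLp[OF cbs_inLp2[OF cbs_D1[OF t]] weak_U[OF t]] by auto

lemma wpartial2_U_ae:
  assumes t: "t \<noteq> 0"
  shows "AE x in lborel. wpartial j (wpartial i (U a t)) x = D2 a t i j x"
proof -
  have m1: "wpartial i (U a t) \<in> borel_measurable lborel"
    using wpartial_U_ae(2)[OF t] unfolding inLp2_iff by auto
  have m2: "D1 a t i \<in> borel_measurable lborel"
    by (rule cbs_measurable[OF cbs_D1[OF t]])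
  have ae: "AE x in lborel. D1 a t i x = wpartial i (U a t) x"
    using wpartial_U_ae(1)[OF t, of i a] by eventually_elim simp
  have "has_weak_partial j (wpartial i (U a t)) (D2 a t i j)"
    by (rule has_weak_partial_cong[OF m2 m1 ae weak_D1[OF t]])
  then show ?thesis
    by (rule wpartial_ae[OF cbs_inLp2[OF cbs_D2[OF t]]])
qed

lemma wlaplace_U_ae:
  assumes t: "t \<noteq> 0"
  shows "AE x in lborel. wlaplace (U a t) x = (\<Sum>i\<in>UNIV. D2 a t i i x)"
proof -
  have "AE x in lborel. \<forall>i\<in>UNIV. wpartial i (wpartial i (U a t)) x = D2 a t i i x"
    by (rule AE_finite_allI) (auto intro: wpartial2_U_ae[OF t])
  then show ?thesis by eventually_elim (simp add: wlaplace_def)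
qed

lemma wlaplace_meas:
  assumes t: "t \<noteq> 0"
  shows "wlaplace (U a t) \<in> borel_measurable lborel"
proof -
  have "wpartial i (wpartial i (U a t)) \<in> borel_measurable lborel" for i
  proof -
    have m1: "wpartial i (U a t) \<in> borel_measurable lborel"
      using wpartial_U_ae(2)[OF t] unfolding inLp2_iff by auto
    have ae: "AE x in lborel. D1 a t i x = wpartial i (U a t) x"
      using wpartial_U_ae(1)[OF t, of i a] by eventually_elim simp
    have "has_weak_partial i (wpartial i (U a t)) (D2 a t i i)"
      by (rule has_weak_partial_cong[OF cbs_measurable[OF cbs_D1[OF t]] m1 ae weak_D1[OF t]])
    from wpartial_inLp[OF cbs_inLp2[OF cbs_D2[OF t]] this] show ?thesis
      unfolding inLp2_iff by auto
  qed
  then show ?thesis unfolding wlaplace_def by (intro borel_measurable_sum) auto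
qed

definition K0 :: "'n::finite itself \<Rightarrow> real" where
  "K0 _ = (\<integral>x. (U 1 1 x)\<^sup>2 \<partial>(lborel :: (real^'n) measure))"
definition K1 :: "'n::finite itself \<Rightarrow> real" where
  "K1 _ = (\<Sum>i\<in>(UNIV::'n set). \<integral>x. (D1 1 1 i x)\<^sup>2 \<partial>(lborel :: (real^'n) measure))"
definition K2 :: "'n::finite itself \<Rightarrow> real" where
  "K2 _ = (\<integral>x. (\<Sum>i\<in>(UNIV::'n set). D2 1 1 i i x)\<^sup>2 \<partial>(lborel :: (real^'n) measure))"
definition K3 :: "'n::finite itself \<Rightarrow> real \<Rightarrow> real" where
  "K3 _ p = (\<integral>x. \<bar>U 1 1 x\<bar> powr p \<partial>(lborel :: (real^'n) measure))"

lemma norm_U: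
  fixes a t :: real
  assumes t: "t > 0"
  shows "(Lnorm 2 (U a t :: real^'n::finite \<Rightarrow> real))\<^sup>2 = a\<^sup>2 * K0 TYPE('n) / t ^ CARD('n)"
proof -
  have "(Lnorm 2 (U a t :: real^'n \<Rightarrow> real))\<^sup>2 = (\<integral>x. (a * U 1 1 (t *\<^sub>R x))\<^sup>2 \<partial>(lborel :: (real^'n) measure))"
    unfolding Lnorm2_sq by (subst U_scale) simp
  also have "\<dots> = (\<integral>x. (a * U 1 1 x)\<^sup>2 \<partial>(lborel :: (real^'n) measure)) / t ^ CARD('n)"
    by (rule integral_scale[OF t, of "\<lambda>x. (a * U 1 1 x)\<^sup>2"])
  also have "\<dots> = a\<^sup>2 * K0 TYPE('n) / t ^ CARD('n)"
    unfolding K0_def by (simp add: power_mult_distrib)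
  finally show ?thesis .
qed

lemma grad_U:
  fixes a t :: real
  assumes t: "t > 0"
  shows "grad_norm2 (U a t :: real^'n::finite \<Rightarrow> real) = a\<^sup>2 * t\<^sup>2 * K1 TYPE('n) / t ^ CARD('n)"
proof -
  have "(Lnorm 2 (wpartial i (U a t :: real^'n \<Rightarrow> real)))\<^sup>2 = a\<^sup>2 * t\<^sup>2 * (\<integral>x. (D1 1 1 i x)\<^sup>2 \<partial>(lborel :: (real^'n) measure)) / t ^ CARD('n)" for i
  proof -
    have t0: "t \<noteq> 0" using t by simp
    have "Lnorm 2 (wpartial i (U a t :: real^'n \<Rightarrow> real)) = Lnorm 2 (D1 a t i)"
      by (rule Lnorm_cong_AE) (use wpartial_U_ae[OF t0, of i a] cbs_measurable[OF cbs_D1[OF t0]] in \<open>auto simp: inLp2_iff\<close>)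
    then have "(Lnorm 2 (wpartial i (U a t :: real^'n \<Rightarrow> real)))\<^sup>2 = (\<integral>x. (D1 a t i x)\<^sup>2 \<partial>(lborel :: (real^'n) measure))"
      using Lnorm2_sq by metis
    also have "(\<lambda>x. (D1 a t i x)\<^sup>2) = (\<lambda>x. (a * t * D1 1 1 i (t *\<^sub>R x))\<^sup>2)"
      by (rule ext) (subst D1_scale, rule refl)
    finally have "(Lnorm 2 (wpartial i (U a t :: real^'n \<Rightarrow> real)))\<^sup>2 = (\<integral>x. (a * t * D1 1 1 i (t *\<^sub>R x))\<^sup>2 \<partial>(lborel :: (real^'n) measure))" .
    also have "\<dots> = (\<integral>x. (a * t * D1 1 1 i x)\<^sup>2 \<partial>(lborel :: (real^'n) measure)) / t ^ CARD('n)"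
      by (rule integral_scale[OF t, of "\<lambda>x. (a * t * D1 1 1 i x)\<^sup>2"])
    also have "\<dots> = a\<^sup>2 * t\<^sup>2 * (\<integral>x. (D1 1 1 i x)\<^sup>2 \<partial>(lborel :: (real^'n) measure)) / t ^ CARD('n)"
      by (simp add: power_mult_distrib)
    finally show ?thesis .
  qed
  then show ?thesis
    unfolding grad_norm2_def K1_def by (simp add: sum_divide_distrib sum_distrib_left)
qed

lemma lap_U:
  fixes a t :: real
  assumes t: "t > 0"
  shows "(Lnorm 2 (wlaplace (U a t :: real^'n::finite \<Rightarrow> real)))\<^sup>2 = a\<^sup>2 * t ^ 4 * K2 TYPE('n) / t ^ CARD('n)"
proof -
  have t0: "t \<noteq> 0" using t by simp
  have mS: "(\<lambda>x::real^'n. \<Sum>i\<in>UNIV. D2 a t i i x) \<in> borel_measurable lborel"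
    using cbs_measurable[OF cbs_D2[OF t0]] by (intro borel_measurable_sum) auto
  have "Lnorm 2 (wlaplace (U a t :: real^'n \<Rightarrow> real)) = Lnorm 2 (\<lambda>x::real^'n. \<Sum>i\<in>UNIV. D2 a t i i x)"
    by (intro Lnorm_cong_AE wlaplace_meas wlaplace_U_ae mS t0)
  then have "(Lnorm 2 (wlaplace (U a t :: real^'n \<Rightarrow> real)))\<^sup>2
      = (\<integral>x. (\<Sum>i\<in>UNIV. D2 a t i i x)\<^sup>2 \<partial>(lborel :: (real^'n) measure))"
    using Lnorm2_sq by metis
  also have "\<dots> = (\<integral>x. (a * t\<^sup>2 * (\<Sum>i\<in>UNIV. D2 1 1 i i (t *\<^sub>R x)))\<^sup>2 \<partial>(lborel :: (real^'n) measure))"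
    by (rule arg_cong[where f="integral\<^sup>L lborel"], rule ext) (simp add: D2_scale[of a t] sum_distrib_left)
  also have "\<dots> = (\<integral>x. (a * t\<^sup>2 * (\<Sum>i\<in>UNIV. D2 1 1 i i x))\<^sup>2 \<partial>(lborel :: (real^'n) measure)) / t ^ CARD('n)"
    by (rule integral_scale[OF t, of "\<lambda>x. (a * t\<^sup>2 * (\<Sum>i\<in>UNIV. D2 1 1 i i x))\<^sup>2"])
  also have "\<dots> = a\<^sup>2 * t ^ 4 * K2 TYPE('n) / t ^ CARD('n)"
    unfolding K2_def by (simp add: power_mult_distrib power_mult[symmetric])
  finally show ?thesis .
qed

lemma Lp_U:
  fixes a t p :: real
  assumes t: "t > 0" and a: "a > 0" and p: "p > 0"
  shows "Lnorm p (U a t :: real^'n::finite \<Rightarrow> real) powr p = a powr p * K3 TYPE('n) p / t ^ CARD('n)"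
proof -
  have "Lnorm p (U a t :: real^'n \<Rightarrow> real) powr p = (\<integral>x. \<bar>a * U 1 1 (t *\<^sub>R x)\<bar> powr p \<partial>(lborel :: (real^'n) measure))"
    unfolding Lnorm_pow[OF p] by (subst U_scale) simp
  also have "\<dots> = (\<integral>x. \<bar>a * U 1 1 x\<bar> powr p \<partial>(lborel :: (real^'n) measure)) / t ^ CARD('n)"
    by (rule integral_scale[OF t, of "\<lambda>x. \<bar>a * U 1 1 x\<bar> powr p"])
  also have "\<dots> = a powr p * K3 TYPE('n) p / t ^ CARD('n)"
    unfolding K3_def using a by (simp add: abs_mult powr_mult)
  finally show ?thesis .
qed

lemma integral_pos_cont:
  fixes g :: "real^'n::finite \<Rightarrow> real"
  assumes c: "continuous_on UNIV g" and i: "integrable lborel g"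
    and nn: "\<And>x. g x \<ge> 0" and p: "g pt > 0"
  shows "(\<integral>x. g x \<partial>lborel) > 0"
proof -
  have "isCont g pt" using c by (simp add: continuous_on_eq_continuous_at)
  then obtain d where d: "d > 0" "\<And>y. dist y pt < d \<Longrightarrow> dist (g y) (g pt) < g pt / 2"
    using \<open>isCont g pt\<close> p unfolding continuous_at_eps_delta using half_gt_zero by blast
  have lb: "indicator (cball pt (d/2)) y *\<^sub>R (g pt / 2) \<le> g y" for y
  proof (cases "y \<in> cball pt (d/2)")
    case True
    then have "dist y pt < d" using d(1) by (simp add: dist_commute)
    then have "dist (g y) (g pt) < g pt / 2" by (rule d(2))
    then have "\<bar>g y - g pt\<bar> < g pt / 2" by (simp add: dist_real_def)
    then have "g pt / 2 < g y" using abs_ge_minus_self[of "g y - g pt"] by linarith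
    then show ?thesis using True by simp
  next
    case False then show ?thesis using nn[of y] by simp
  qed
  have ii: "integrable lborel (\<lambda>y::real^'n. indicator (cball pt (d/2)) y *\<^sub>R (g pt / 2))"
    by (rule borel_integrable_compact) (auto intro: continuous_intros)
  have "(\<integral>y. indicator (cball pt (d/2)) y *\<^sub>R (g pt / 2) \<partial>lborel) \<le> (\<integral>x. g x \<partial>lborel)"
    by (rule integral_mono[OF ii i lb])
  moreover have "(\<integral>y. indicator (cball pt (d/2)) y *\<^sub>R (g pt / 2) \<partial>lborel) = measure lborel (cball pt (d/2)) * (g pt / 2)"
    by simp
  moreover have "measure lborel (cball pt (d/2)) > 0"
    using content_cball_pos[of "d/2" pt] d(1) by simp
  ultimately show ?thesis using p by (metis half_gt_zero less_le_trans mult_pos_pos)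
qed

lemma U11_0: "U 1 1 (0::real^'n::finite) = 1"
  by (simp add: U_def qf_def P3f_def)

lemma K0_pos: "K0 TYPE('n::finite) > 0"
proof -
  have cbU: "cbs (U 1 1 :: real^'n \<Rightarrow> real)" by (rule cbs_U) simp
  have cb: "cbs (\<lambda>x::real^'n. U 1 1 x * U 1 1 x)"
    using cbU by (rule cbs_mult_cont) (use cbU in \<open>auto simp: cbs_def\<close>)
  have "(\<integral>x. U 1 1 x * U 1 1 x \<partial>(lborel :: (real^'n) measure)) > 0"
    by (rule integral_pos_cont[where pt=0]) (use cb cbs_integrable[OF cb] in \<open>auto simp: cbs_def U11_0\<close>)
  then show ?thesis unfolding K0_def by (simp add: power2_eq_square)
qed

lemma K3_pos:
  assumes p: "p > 0"
  shows "K3 TYPE('n::finite) p > 0"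
proof -
  have cbU: "cbs (U 1 1 :: real^'n \<Rightarrow> real)" by (rule cbs_U) simp
  have cu: "continuous_on UNIV (U 1 1 :: real^'n \<Rightarrow> real)"
    using cbU by (simp add: cbs_def)
  have cg: "continuous_on UNIV (\<lambda>x::real^'n. \<bar>U 1 1 x\<bar> powr p)"
    by (rule continuous_on_powr') (use p cu in \<open>auto intro: continuous_intros\<close>)
  have cb: "cbs (\<lambda>x::real^'n. \<bar>U 1 1 x\<bar> powr p)"
  proof -
    have "{x::real^'n. \<bar>U 1 1 x\<bar> powr p \<noteq> 0} \<subseteq> {x. U 1 1 x \<noteq> 0}" by auto
    moreover have "bounded {x::real^'n. U 1 1 x \<noteq> 0}" using cbU by (simp add: cbs_def)
    ultimately show ?thesis unfolding cbs_def using cg bounded_subset by blast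
  qed
  have "(\<integral>x. \<bar>U 1 1 x\<bar> powr p \<partial>(lborel :: (real^'n) measure)) > 0"
    by (rule integral_pos_cont[where pt=0]) (use cg cbs_integrable[OF cb] in \<open>auto simp: U11_0\<close>)
  then show ?thesis unfolding K3_def .
qed

lemma K1_nonneg: "K1 TYPE('n::finite) \<ge> 0"
  unfolding K1_def by (intro sum_nonneg integral_nonneg_AE AE_I2) auto

lemma K2_nonneg: "K2 TYPE('n::finite) \<ge> 0"
  unfolding K2_def by (intro integral_nonneg_AE AE_I2) auto

lemma lower_bound:
  fixes u :: "real^'n::finite \<Rightarrow> real" and \<mu> p c :: real
  defines "s \<equiv> crit TYPE('n)" and "S \<equiv> Sob_const TYPE('n)" and "r \<equiv> rstar TYPE('n) \<mu> p"
  assumes s2: "s > 2" and p2: "2 < p" and ps: "p < s" and mu: "\<mu> > 0"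
    and c: "c > 0" and S0: "S \<noteq> 0"
    and u: "u \<in> Vr \<mu> p c"
  shows "Ifun \<mu> p u \<ge> - (\<mu> / p) * (c + (r\<^sup>2 / S) powr (s / 2)) - 1 / s * (r\<^sup>2 / S) powr (s / 2)"
proof -
  define L where "L = (Lnorm 2 (wlaplace u))\<^sup>2"
  define G where "G = grad_norm2 u"
  define Ls where "Ls = Lnorm s u"
  define B where "B = (r\<^sup>2 / S) powr (s / 2)"
  have uH2: "u \<in> H2" and l2: "(Lnorm 2 u)\<^sup>2 = c" and lt: "L + G < r\<^sup>2"
    using u unfolding Vr_def Sr_def H2r_def L_def G_def r_def by auto
  have G0: "G \<ge> 0" unfolding G_def grad_norm2_def by (intro sum_nonneg) auto
  have L0: "L \<ge> 0" unfolding L_def by simp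
  have Lr: "L < r\<^sup>2" using lt G0 by linarith
  define R where "R = {(Lnorm 2 (wlaplace v))\<^sup>2 / (Lnorm (crit TYPE('n)) v)\<^sup>2 | v :: real^'n \<Rightarrow> real. v \<in> H2 \<and> Lnorm 2 v \<noteq> 0}"
  have SR: "S = Inf R" unfolding S_def R_def Sob_const_def ..
  have un0: "Lnorm 2 u \<noteq> 0" using l2 c by auto
  have mem: "L / Ls\<^sup>2 \<in> R" unfolding R_def L_def Ls_def s_def using uH2 un0 by blast
  have Rnn: "\<And>y. y \<in> R \<Longrightarrow> 0 \<le> y" unfolding R_def by auto
  have bdd: "bdd_below R" using Rnn by (intro bdd_belowI) auto
  have Sle: "S \<le> L / Ls\<^sup>2" unfolding SR by (rule cInf_lower[OF mem bdd])
  have Sge: "S \<ge> 0" unfolding SR by (rule cInf_greatest) (use mem Rnn in auto)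
  have Spos: "S > 0" using Sge S0 by simp
  have Ls0: "Ls \<noteq> 0"
  proof
    assume "Ls = 0"
    then have "S \<le> 0" using Sle by simp
    then show False using Spos by simp
  qed
  have Lsnn: "Ls \<ge> 0" unfolding Ls_def Lnorm_def by simp
  have Lspos: "Ls > 0" using Ls0 Lsnn by simp
  have "S * Ls\<^sup>2 \<le> L" using Sle Lspos by (simp add: le_divide_eq)
  then have "Ls\<^sup>2 \<le> L / S" using Spos by (simp add: le_divide_eq mult.commute)
  also have "L / S \<le> r\<^sup>2 / S" using Lr Spos by (simp add: divide_right_mono)
  finally have Ls2: "Ls\<^sup>2 \<le> r\<^sup>2 / S" .
  have "(Ls\<^sup>2) powr (s / 2) = (Ls powr 2) powr (s / 2)"
    using Lspos by (simp add: powr_numeral)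
  also have "\<dots> = Ls powr (2 * (s / 2))" by (rule powr_powr)
  finally have "Ls powr s = (Ls\<^sup>2) powr (s / 2)" by simp
  also have "\<dots> \<le> B" unfolding B_def using Ls2 s2 by (intro powr_mono2) auto
  finally have LsB: "Ls powr s \<le> B" .
  have s0: "s > 0" using s2 by simp
  have p0: "p > 0" using p2 by simp
  have Lsint: "Ls powr s = (\<integral>x. \<bar>u x\<bar> powr s \<partial>lborel)"
    unfolding Ls_def by (rule Lnorm_pow[OF s0])
  have ints: "integrable lborel (\<lambda>x. \<bar>u x\<bar> powr s)"
  proof (rule ccontr)
    assume "\<not> integrable lborel (\<lambda>x. \<bar>u x\<bar> powr s)"
    then have "(\<integral>x. \<bar>u x\<bar> powr s \<partial>lborel) = 0" by (rule not_integrable_integral_eq)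
    then have "Ls = 0" unfolding Ls_def Lnorm_def by simp
    then show False using Ls0 by simp
  qed
  have inl2: "inLp 2 u" using uH2 unfolding H2_def by auto
  then have int2: "integrable lborel (\<lambda>x. \<bar>u x\<bar> powr 2)" and um: "u \<in> borel_measurable lborel"
    unfolding inLp_def by auto
  have c2: "(\<integral>x. \<bar>u x\<bar> powr 2 \<partial>lborel) = c"
    using l2 unfolding Lnorm2_sq abs_powr2 .
  have "Lnorm p u powr p = (\<integral>x. \<bar>u x\<bar> powr p \<partial>lborel)" by (rule Lnorm_pow[OF p0])
  also have "\<dots> \<le> (\<integral>x. \<bar>u x\<bar> powr 2 + \<bar>u x\<bar> powr s \<partial>lborel)"
  proof (rule integral_mono')
    show "integrable lborel (\<lambda>x. \<bar>u x\<bar> powr 2 + \<bar>u x\<bar> powr s)" using int2 ints by simp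
    show "0 \<le> \<bar>u x\<bar> powr 2 + \<bar>u x\<bar> powr s" for x by simp
    show "\<bar>u x\<bar> powr p \<le> \<bar>u x\<bar> powr 2 + \<bar>u x\<bar> powr s" for x
    proof (cases "\<bar>u x\<bar> \<le> 1")
      case True
      then have "\<bar>u x\<bar> powr p \<le> \<bar>u x\<bar> powr 2" using p2 by (intro powr_mono') auto
      then show ?thesis using powr_ge_zero[of "\<bar>u x\<bar>" s] by linarith
    next
      case False
      then have "\<bar>u x\<bar> powr p \<le> \<bar>u x\<bar> powr s" using ps by (intro powr_mono) auto
      then show ?thesis using powr_ge_zero[of "\<bar>u x\<bar>" 2] by linarith
    qed
  qed
  also have "\<dots> = c + Ls powr s" using int2 ints c2 Lsint by simp
  also have "\<dots> \<le> c + B" using LsB by simp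
  finally have Lp: "Lnorm p u powr p \<le> c + B" .
  have t1: "\<mu> / p * Lnorm p u powr p \<le> \<mu> / p * (c + B)"
    using Lp mu p0 by (intro mult_left_mono) auto
  have t2: "1 / s * Lnorm s u powr s \<le> 1 / s * B"
    using LsB s0 unfolding Ls_def by (intro mult_left_mono) auto
  have "Ifun \<mu> p u = 1/2 * L + 1/2 * G - \<mu> / p * Lnorm p u powr p - 1 / s * Lnorm s u powr s"
    unfolding Ifun_def L_def G_def s_def by simp
  then show ?thesis using t1 t2 L0 G0 unfolding B_def by linarith
qed

theorem lemma3p2:
  fixes \<mu> p c :: real
  assumes "CARD('n::finite) \<ge> 5"
    and "\<mu> > 0"
    and "2 < p" and "p < 2 + 4 / real CARD('n)"
    and "0 < c" and "c < cstar TYPE('n) \<mu> p"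
  shows "bdd_below (Ifun \<mu> p ` (Vr \<mu> p c :: (real^'n \<Rightarrow> real) set))
       \<and> (Vr \<mu> p c :: (real^'n \<Rightarrow> real) set) \<noteq> {}
       \<and> Inf (Ifun \<mu> p ` (Vr \<mu> p c :: (real^'n \<Rightarrow> real) set)) < 0"
proof -
  note N5 = assms(1) and mu = assms(2) and p2 = assms(3) and pN = assms(4) and c0 = assms(5) and cc = assms(6)
  define N where "N = real CARD('n)"
  define s where "s = crit TYPE('n)"
  define g where "g = gam TYPE('n) p"
  define C where "C = GN_const TYPE('n) p"
  define S where "S = Sob_const TYPE('n)"
  define E where "E = Ecal TYPE('n) \<mu> p"
  define cs where "cs = cstar TYPE('n) \<mu> p"
  define rs where "rs = rstar TYPE('n) \<mu> p"
  have N5': "N \<ge> 5" unfolding N_def using N5 by simp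
  have sN: "s = 2 * N / (N - 4)" unfolding s_def crit_def dimN_def N_def ..
  have s_eq: "s = 2 + 8 / (N - 4)" unfolding sN using N5' by (simp add: field_simps)
  have s2: "s > 2" unfolding s_eq using N5' by simp
  have pN': "p * N < 2 * N + 4" using pN N5' unfolding N_def by (simp add: field_simps)
  have ps: "p < s"
  proof -
    have "4 / N < 8 / (N - 4)" using N5' by (simp add: field_simps)
    moreover have "p < 2 + 4 / N" using pN unfolding N_def .
    ultimately show ?thesis unfolding s_eq by linarith
  qed
  have pg_eq: "p * g = N * (p - 2) / 4"
    unfolding g_def gam_def dimN_def N_def using p2 by (simp add: field_simps)
  have pg1: "p * g < 1" unfolding pg_eq using pN' by (simp add: field_simps)
  have pg0: "p * g > 0" unfolding pg_eq using p2 N5' by simp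
  have cs0: "cs > 0" using c0 cc unfolding cs_def by simp
  have E0: "E \<noteq> 0"
  proof
    assume "E = 0"
    then have "cs = 0" unfolding cs_def cstar_def Let_def E_def[symmetric] by simp
    then show False using cs0 by simp
  qed
  have S0: "S \<noteq> 0" and C0: "C \<noteq> 0"
  proof -
    show "S \<noteq> 0"
    proof
      assume "S = 0"
      then have "E = 0" unfolding E_def Ecal_def Let_def S_def[symmetric] using s2 by simp
      then show False using E0 by simp
    qed
    show "C \<noteq> 0"
    proof
      assume "C = 0"
      then have "E = 0" unfolding E_def Ecal_def Let_def C_def[symmetric] using p2 by simp
      then show False using E0 by simp
    qed
  qed
  have rs0: "rs > 0"
  proof -
    have "(2 - p * g) * \<mu> * s * S powr (s / 2) * C powr p * cs powr (p * (1 - g) / 2) \<noteq> 0"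
      using pg1 mu s2 S0 C0 cs0 by simp
    moreover have "(s - 2) * p \<noteq> 0" using s2 p2 by simp
    ultimately show ?thesis
      unfolding rs_def rstar_def rc_def Let_def cs_def[symmetric] s_def[symmetric] g_def[symmetric]
        S_def[symmetric] C_def[symmetric] by simp
  qed
  define lb where "lb = - (\<mu> / p) * (c + (rs\<^sup>2 / S) powr (s / 2)) - 1 / s * (rs\<^sup>2 / S) powr (s / 2)"
  have LB: "lb \<le> Ifun \<mu> p u" if "u \<in> (Vr \<mu> p c :: (real^'n \<Rightarrow> real) set)" for u
    unfolding lb_def rs_def S_def s_def
    by (rule lower_bound) (use s2 p2 ps mu c0 S0 that in \<open>auto simp: s_def S_def\<close>)
  have bdd: "bdd_below (Ifun \<mu> p ` (Vr \<mu> p c :: (real^'n \<Rightarrow> real) set))"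
    using LB by (intro bdd_belowI) auto
  define K0v where "K0v = K0 TYPE('n)"
  define K1v where "K1v = K1 TYPE('n)"
  define K2v where "K2v = K2 TYPE('n)"
  define K3v where "K3v = K3 TYPE('n) p"
  have K0p: "K0v > 0" unfolding K0v_def by (rule K0_pos)
  have K3p: "K3v > 0" unfolding K3v_def using p2 by (intro K3_pos) simp
  have K1n: "K1v \<ge> 0" unfolding K1v_def by (rule K1_nonneg)
  have K2n: "K2v \<ge> 0" unfolding K2v_def by (rule K2_nonneg)
  define A where "A = c * (K1v + K2v) / K0v / 2"
  define Bc where "Bc = \<mu> / p * (c / K0v) powr (p / 2) * K3v"
  define \<beta> where "\<beta> = N * p / 2 - N"
  have A0: "A \<ge> 0" unfolding A_def using c0 K0p K1n K2n by simp
  have Bc0: "Bc > 0" unfolding Bc_def using mu p2 c0 K0p K3p by simp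
  have \<beta>0: "\<beta> > 0" unfolding \<beta>_def using p2 N5' by (simp add: field_simps)
  have \<beta>2: "\<beta> < 2" unfolding \<beta>_def using pN' by (simp add: field_simps)
  define t1 where "t1 = rs / (sqrt (2 * A) + 1)"
  define t2 where "t2 = (Bc / (A + 1)) powr (1 / (2 - \<beta>))"
  define t where "t = min 1 (min t1 t2)"
  have t1p: "t1 > 0" unfolding t1_def using rs0 A0 by (simp add: add_nonneg_pos)
  have t2p: "t2 > 0" unfolding t2_def using Bc0 A0 by simp
  have tp: "t > 0" unfolding t_def using t1p t2p by simp
  have t_le1: "t \<le> 1" and t_le_t1: "t \<le> t1" and t_le_t2: "t \<le> t2" unfolding t_def by auto
  define a where "a = sqrt (c * t ^ CARD('n) / K0v)"
  have ap: "a > 0" unfolding a_def using c0 tp K0p by simp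
  have a2: "a\<^sup>2 = c * t ^ CARD('n) / K0v" unfolding a_def using c0 tp K0p by simp
  define u where "u = (U a t :: real^'n \<Rightarrow> real)"
  have tN: "t ^ CARD('n) > 0" using tp by simp
  have nU: "(Lnorm 2 u)\<^sup>2 = c"
    unfolding u_def norm_U[OF tp] a2 K0v_def[symmetric] using tp K0p by simp
  have gU: "grad_norm2 u = c * t\<^sup>2 * K1v / K0v"
    unfolding u_def grad_U[OF tp] a2 K1v_def[symmetric] using tp K0p by simp
  have lU: "(Lnorm 2 (wlaplace u))\<^sup>2 = c * t ^ 4 * K2v / K0v"
    unfolding u_def lap_U[OF tp] a2 K2v_def[symmetric] using tp K0p by simp
  have uH2r: "u \<in> H2r" unfolding u_def using tp ap by (intro U_H2r) auto
  have t4: "t ^ 4 \<le> t\<^sup>2"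
  proof -
    have "t ^ 4 = t\<^sup>2 * t\<^sup>2" by (simp add: power4_eq_xxxx power2_eq_square)
    also have "\<dots> \<le> t\<^sup>2 * 1" using t_le1 tp by (intro mult_left_mono) (auto simp: power_le_one)
    finally show ?thesis by simp
  qed
  have sumle: "(Lnorm 2 (wlaplace u))\<^sup>2 + grad_norm2 u \<le> 2 * A * t\<^sup>2"
  proof -
    have "c * t ^ 4 * K2v / K0v \<le> c * t\<^sup>2 * K2v / K0v"
      using t4 c0 K2n K0p by (intro divide_right_mono mult_right_mono mult_left_mono) auto
    then show ?thesis unfolding lU gU A_def using K0p by (simp add: field_simps)
  qed
  have At1: "2 * A * t\<^sup>2 < rs\<^sup>2"
  proof -
    have "t * (sqrt (2 * A) + 1) \<le> rs"
      using t_le_t1 A0 unfolding t1_def by (simp add: le_divide_eq add_nonneg_pos)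
    then have "t * sqrt (2 * A) < rs" using tp by (simp add: algebra_simps)
    moreover have "0 \<le> t * sqrt (2 * A)" using tp A0 by simp
    ultimately have "(t * sqrt (2 * A))\<^sup>2 < rs\<^sup>2" by (intro power_strict_mono) auto
    then show ?thesis using A0 by (simp add: power_mult_distrib algebra_simps)
  qed
  have uV: "u \<in> Vr \<mu> p c"
    unfolding Vr_def Sr_def rs_def[symmetric] using uH2r nU sumle At1 by auto
  have p0: "p > 0" using p2 by simp
  have Lp: "\<mu> / p * Lnorm p u powr p = Bc * t powr \<beta>"
  proof -
    have "Lnorm p u powr p = a powr p * K3v / t ^ CARD('n)"
      unfolding u_def K3v_def by (rule Lp_U[OF tp ap p0])
    also have "a powr p = (a\<^sup>2) powr (p / 2)"
    proof -
      have "(a\<^sup>2) powr (p / 2) = (a powr 2) powr (p / 2)" using ap by (simp add: powr_numeral)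
      also have "\<dots> = a powr (2 * (p / 2))" by (rule powr_powr)
      finally show ?thesis by simp
    qed
    also have "(a\<^sup>2) powr (p / 2) = (c / K0v) powr (p / 2) * (t powr N) powr (p / 2)"
      unfolding a2 using c0 K0p tp
      by (simp add: powr_mult[symmetric] powr_realpow N_def mult.commute[of c] divide_simps)
    also have "(t powr N) powr (p / 2) = t powr (N * p / 2)"
      by (simp add: powr_powr)
    finally have "Lnorm p u powr p = (c / K0v) powr (p / 2) * t powr (N * p / 2) * K3v / t powr N"
      using tp by (simp add: powr_realpow N_def)
    also have "t powr (N * p / 2) / t powr N = t powr \<beta>"
      unfolding \<beta>_def by (simp add: powr_diff)
    moreover have "(c / K0v) powr (p / 2) * t powr (N * p / 2) * K3v / t powr N
        = (c / K0v) powr (p / 2) * K3v * (t powr (N * p / 2) / t powr N)"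
      by simp
    ultimately have "Lnorm p u powr p = (c / K0v) powr (p / 2) * K3v * t powr \<beta>"
      by simp
    then show ?thesis unfolding Bc_def by (simp add: field_simps)
  qed
  have key: "A * t\<^sup>2 < Bc * t powr \<beta>"
  proof -
    have "t powr (2 - \<beta>) \<le> t2 powr (2 - \<beta>)"
      using t_le_t2 tp \<beta>2 by (intro powr_mono2) auto
    also have "t2 powr (2 - \<beta>) = Bc / (A + 1)"
    proof -
      have "t2 powr (2 - \<beta>) = (Bc / (A + 1)) powr (1 / (2 - \<beta>) * (2 - \<beta>))"
        unfolding t2_def by (rule powr_powr)
      also have "\<dots> = Bc / (A + 1)" using \<beta>2 Bc0 A0 by simp
      finally show ?thesis .
    qed
    finally have tb: "t powr (2 - \<beta>) \<le> Bc / (A + 1)" .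
    have "A * t powr (2 - \<beta>) \<le> A * (Bc / (A + 1))" using tb A0 by (intro mult_left_mono) auto
    also have "\<dots> < Bc" using A0 Bc0 by (simp add: field_simps)
    finally have "A * t powr (2 - \<beta>) < Bc" .
    then have "A * t powr (2 - \<beta>) * t powr \<beta> < Bc * t powr \<beta>" using tp by simp
    moreover have "t powr (2 - \<beta>) * t powr \<beta> = t\<^sup>2"
      using tp by (simp add: powr_add[symmetric] powr_numeral)
    ultimately show ?thesis by (simp add: mult.assoc)
  qed
  have Ineg: "Ifun \<mu> p u < 0"
  proof -
    have s0: "s > 0" using s2 by simp
    have "0 \<le> 1 / s * Lnorm s u powr s" using s0 by simp
    moreover have "Ifun \<mu> p u = 1/2 * (Lnorm 2 (wlaplace u))\<^sup>2 + 1/2 * grad_norm2 u - \<mu> / p * Lnorm p u powr p - 1 / s * Lnorm s u powr s"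
      unfolding Ifun_def s_def by simp
    ultimately show ?thesis using sumle key Lp by linarith
  qed
  have ne: "(Vr \<mu> p c :: (real^'n \<Rightarrow> real) set) \<noteq> {}" using uV by blast
  have "Inf (Ifun \<mu> p ` (Vr \<mu> p c :: (real^'n \<Rightarrow> real) set)) \<le> Ifun \<mu> p u"
    by (rule cInf_lower) (use uV bdd in auto)
  then show ?thesis using bdd ne Ineg by linarith
qed

end
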